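(* For all density matrices $\rho_{AB}$ on $\mathcal H_A\otimes\mathcal H_B$ and $\sigma_{A'B'}$ on $\mathcal H_{A'}\otimes\mathcal H_{B'}$, regarding $\rho_{AB}\otimes\sigma_{A'B'}$ as a bipartite state between $AA'$ and $BB'$, we have $\mu_{\mathrm{ent}}(\rho_{AB}\otimes\sigma_{A'B'})=\max\{\mu_{\mathrm{ent}}(\rho_{AB}),\mu_{\mathrm{ent}}(\sigma_{A'B'})\}$.
   Context: All Hilbert spaces are finite-dimensional. For a bipartite density matrix $\rho_{AB}$ with reduced states $\rho_A,\rho_B$, the maximal correlation is $\mu(\rho_{AB})=\max |\mathrm{tr}(\rho_{AB}\, X_A\otimes Y_B^\dagger)|$ over $X_A\in\mathbf L(\mathcal H_A)$, $Y_B\in\mathbf L(\mathcal H_B)$ with $\mathrm{tr}(\rho_A X_A)=\mathrm{tr}(\rho_B Y_B)=0$ and $\mathrm{tr}(\rho_A X_AX_A^\dagger)=\mathrm{tr}(\rho_B Y_BY_B^\dagger)=1$. The maximal entanglement is $\mu_{\mathrm{ent}}(\rho_{AB})=\inf \max_i \mu(\tau^{(i)}_{AB})$, the infimum over all decompositions $\rho_{AB}=\sum_i p_i\tau^{(i)}_{AB}$ with $p_i\ge0$ and $\tau^{(i)}_{AB}$ density matrices. *)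

theory Defs
  imports Complex_Main
begin

text \<open>Finite-dimensional Hilbert spaces are modelled as functions on a finite
index type; an operator on such a space is a complex matrix indexed by that type.
A bipartite operator on H_A tensor H_B is indexed by the product type.\<close>

type_synonym 'i cmat = "'i \<Rightarrow> 'i \<Rightarrow> complex"

definition mtrace :: "'i::finite cmat \<Rightarrow> complex" where
  "mtrace M = (\<Sum>i\<in>UNIV. M i i)"

definition mmul :: "'i::finite cmat \<Rightarrow> 'i cmat \<Rightarrow> 'i cmat" where
  "mmul M N = (\<lambda>i k. \<Sum>j\<in>UNIV. M i j * N j k)"

definition adj :: "'i cmat \<Rightarrow> 'i cmat" where
  "adj M = (\<lambda>i j. cnj (M j i))"

definition psd :: "'i::finite cmat \<Rightarrow> bool" where
  "psd M \<longleftrightarrow> (\<forall>v :: 'i \<Rightarrow> complex.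
      Im (\<Sum>i\<in>UNIV. \<Sum>j\<in>UNIV. cnj (v i) * M i j * v j) = 0 \<and>
      Re (\<Sum>i\<in>UNIV. \<Sum>j\<in>UNIV. cnj (v i) * M i j * v j) \<ge> 0)"

definition density :: "'i::finite cmat \<Rightarrow> bool" where
  "density M \<longleftrightarrow> psd M \<and> mtrace M = 1"

definition red_A :: "('a \<times> 'b::finite) cmat \<Rightarrow> 'a cmat" where
  "red_A \<rho> = (\<lambda>i j. \<Sum>b\<in>UNIV. \<rho> (i, b) (j, b))"

definition red_B :: "('a::finite \<times> 'b) cmat \<Rightarrow> 'b cmat" where
  "red_B \<rho> = (\<lambda>i j. \<Sum>a\<in>UNIV. \<rho> (a, i) (a, j))"

definition kron :: "'a cmat \<Rightarrow> 'b cmat \<Rightarrow> ('a \<times> 'b) cmat" where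
  "kron X Y = (\<lambda>(i, k) (j, l). X i j * Y k l)"

text \<open>Maximal correlation. The set of values is bounded; the extra 0 only
matters when no admissible X, Y exist (trivial local dimension), where we use
the convention mu = 0.\<close>
definition max_corr :: "('a::finite \<times> 'b::finite) cmat \<Rightarrow> real" where
  "max_corr \<rho> = Sup ({cmod (mtrace (mmul \<rho> (kron X (adj Y)))) | X Y.
       mtrace (mmul (red_A \<rho>) X) = 0 \<and> mtrace (mmul (red_B \<rho>) Y) = 0 \<and>
       mtrace (mmul (red_A \<rho>) (mmul X (adj X))) = 1 \<and>
       mtrace (mmul (red_B \<rho>) (mmul Y (adj Y))) = 1} \<union> {0})"

definition max_ent :: "('a::finite \<times> 'b::finite) cmat \<Rightarrow> real" where
  "max_ent \<rho> = Inf {m. \<exists>(n::nat) (p :: nat \<Rightarrow> real) (\<tau> :: nat \<Rightarrow> ('a \<times> 'b) cmat).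
       0 < n \<and> (\<forall>i<n. 0 \<le> p i \<and> density (\<tau> i)) \<and>
       \<rho> = (\<lambda>x y. \<Sum>i<n. complex_of_real (p i) * \<tau> i x y) \<and>
       m = Max ((\<lambda>i. max_corr (\<tau> i)) ` {..<n})}"

definition state_tensor :: "('a \<times> 'b) cmat \<Rightarrow> ('c \<times> 'd) cmat \<Rightarrow> (('a \<times> 'c) \<times> ('b \<times> 'd)) cmat" where
  "state_tensor \<rho> \<sigma> = (\<lambda>((a, c), (b, d)) ((a', c'), (b', d')). \<rho> (a, b) (a', b') * \<sigma> (c, d) (c', d'))"

end

theory Submission
  imports Defs "HOL-Analysis.L2_Norm"
begin


definition qf :: "'i::finite cmat \<Rightarrow> ('i \<Rightarrow> complex) \<Rightarrow> complex" where
  "qf M v = (\<Sum>i\<in>UNIV. \<Sum>j\<in>UNIV. cnj (v i) * M i j * v j)"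

lemma psdD: "psd M \<Longrightarrow> Im (qf M v) = 0 \<and> Re (qf M v) \<ge> 0"
  unfolding psd_def qf_def by blast

lemma qf_add: "qf M (\<lambda>k. f k + g k) = qf M f + qf M g + (\<Sum>i\<in>UNIV. \<Sum>j\<in>UNIV. cnj (f i) * M i j * g j)
   + (\<Sum>i\<in>UNIV. \<Sum>j\<in>UNIV. cnj (g i) * M i j * f j)"
  unfolding qf_def by (simp add: algebra_simps sum.distrib)

lemma cnj_if: "cnj (if P then a else 0) = (if P then cnj a else 0)" by simp
lemma mult_if0: "x * (if P then y else 0) = (if P then x * y else (0::complex))" by simp
lemma if0_mult: "(if P then y else 0) * x = (if P then y * x else (0::complex))" by simp

lemma qf_two:
  fixes M :: "'i::finite cmat"
  shows "qf M (\<lambda>k. (if k = i then a else 0) + (if k = j then b else 0)) =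
    cnj a * M i i * a + cnj a * M i j * b + cnj b * M j i * a + cnj b * M j j * b"
  unfolding qf_add unfolding qf_def
  by (simp only: cnj_if mult_if0 if0_mult sum.delta sum.delta' finite UNIV_I if_True, simp add: algebra_simps)

lemma psd_diag: assumes "psd M" shows "Im (M i i) = 0" "Re (M i i) \<ge> 0"
proof -
  have "qf M (\<lambda>k. (if k = i then 1 else 0) + (if k = i then 0 else 0)) = M i i"
    by (simp only: qf_two, simp)
  then show "Im (M i i) = 0" "Re (M i i) \<ge> 0" using psdD[OF assms] by metis+
qed

lemma psd_herm: assumes "psd M" shows "M j i = cnj (M i j)"
proof -
  have d: "Im (M i i) = 0" "Im (M j j) = 0" using psd_diag[OF assms] by auto
  have 1: "Im (qf M (\<lambda>k. (if k = i then 1 else 0) + (if k = j then 1 else 0))) = 0"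
    using psdD[OF assms] by blast
  have 2: "Im (qf M (\<lambda>k. (if k = i then 1 else 0) + (if k = j then \<i> else 0))) = 0"
    using psdD[OF assms] by blast
  from 1 2 d show ?thesis unfolding qf_two
    by (simp add: complex_eq_iff algebra_simps)
qed


lemma qf_minus_rank1: "qf (\<lambda>i j. M i j - c * p i * q j) v =
   qf M v - c * (\<Sum>i\<in>UNIV. cnj (v i) * p i) * (\<Sum>j\<in>UNIV. q j * v j)"
  unfolding qf_def
  by (simp add: algebra_simps sum_subtractf sum_distrib_left sum_distrib_right)

lemma if_sum0: "(\<Sum>j\<in>A. if P then f j else (0::complex)) = (if P then (\<Sum>j\<in>A. f j) else 0)"
  by simp

lemma qf_plus_delta: "qf M (\<lambda>k. v k + (if k = x then t else 0)) =
   qf M v + t * (\<Sum>i\<in>UNIV. cnj (v i) * M i x) + cnj t * (\<Sum>j\<in>UNIV. M x j * v j) + cnj t * M x x * t"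
  unfolding qf_add unfolding qf_def
  by (simp only: cnj_if mult_if0 if0_mult if_sum0 sum.delta sum.delta' finite UNIV_I if_True,
      simp add: algebra_simps sum_distrib_left sum_distrib_right)


lemma cnj_mult_self: "cnj c * c = complex_of_real ((cmod c)^2)"
  using complex_norm_square[of c] by (simp add: mult.commute)
lemma mult_cnj_self: "c * cnj c = complex_of_real ((cmod c)^2)"
  using complex_norm_square[of c] by simp

lemma psd_diag_zero: assumes "psd M" "M x x = 0" shows "M x j = 0"
proof (rule ccontr)
  assume c0: "M x j \<noteq> 0"
  define c where "c = M x j"
  then have "c \<noteq> 0" using c0 by simp
  define r where "r = (Re (M j j) + 1) / (2 * (cmod c)^2)"
  have cpos: "(cmod c)^2 > 0" using \<open>c \<noteq> 0\<close> by simp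
  have herm: "M j x = cnj c" using psd_herm[OF assms(1), of x j] c_def by simp
  define a where "a = - (of_real r * c)"
  have "Re (qf M (\<lambda>k. (if k = x then a else 0) + (if k = j then 1 else 0))) \<ge> 0"
    using psdD[OF assms(1)] by blast
  moreover have "qf M (\<lambda>k. (if k = x then a else 0) + (if k = j then 1 else 0)) =
     cnj a * c + cnj c * a + M j j"
    unfolding qf_two using assms(2) herm c_def by simp
  moreover have "cnj a * c = - of_real (r * (cmod c)^2)" unfolding a_def
    by (simp add: cnj_mult_self mult.assoc)
  moreover have "cnj c * a = - of_real (r * (cmod c)^2)" unfolding a_def
    by (simp add: cnj_mult_self mult.left_commute)
  ultimately have "0 \<le> - 2 * r * (cmod c)^2 + Re (M j j)" by simp
  moreover have "2 * r * (cmod c)^2 = Re (M j j) + 1" unfolding r_def using cpos by simp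
  ultimately show False by linarith
qed
lemma chol_aux:
  fixes S :: "'i::finite set"
  assumes "finite S"
  shows "\<forall>M. psd M \<and> (\<forall>i j. i \<notin> S \<longrightarrow> M i j = 0) \<and> (\<forall>i j. j \<notin> S \<longrightarrow> M i j = 0) \<longrightarrow>
     (\<exists>K (w :: nat \<Rightarrow> 'i \<Rightarrow> complex). M = (\<lambda>i j. \<Sum>k<K. w k i * cnj (w k j)))"
  using assms
proof (induction S rule: finite_induct)
  case empty
  show ?case by (intro allI impI exI[of _ 0]) auto
next
  case (insert x S)
  show ?case
  proof (intro allI impI)
    fix M :: "'i cmat"
    assume H: "psd M \<and> (\<forall>i j. i \<notin> insert x S \<longrightarrow> M i j = 0) \<and> (\<forall>i j. j \<notin> insert x S \<longrightarrow> M i j = 0)"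
    then have psdM: "psd M" by blast
    show "\<exists>K (w :: nat \<Rightarrow> 'i \<Rightarrow> complex). M = (\<lambda>i j. \<Sum>k<K. w k i * cnj (w k j))"
    proof (cases "M x x = 0")
      case True
      have r: "M x j = 0" for j using psd_diag_zero[OF psdM True] .
      have c: "M j x = 0" for j using psd_herm[OF psdM, of x j] r by simp
      have z1: "\<forall>i j. i \<notin> S \<longrightarrow> M i j = 0"
      proof (intro allI impI)
        fix i j assume "i \<notin> S" then show "M i j = 0" using H r by (cases "i = x") auto
      qed
      have z2: "\<forall>i j. j \<notin> S \<longrightarrow> M i j = 0"
      proof (intro allI impI)
        fix i j assume "j \<notin> S" then show "M i j = 0" using H c by (cases "j = x") auto
      qed
      show ?thesis using insert.IH[rule_format, of M] psdM z1 z2 by blast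
    next
      case False
      define r where "r = Re (M x x)"
      have Mxx: "M x x = of_real r" using psd_diag[OF psdM, of x] r_def by (simp add: complex_eq_iff)
      have rpos: "r > 0" using psd_diag(2)[OF psdM, of x] False Mxx by force
      define u where "u = (\<lambda>j. M j x / of_real (sqrt r))"
      define M' where "M' = (\<lambda>i j. M i j - (1 / of_real r) * M i x * M x j)"
      have uu: "u i * cnj (u j) = (1 / of_real r) * M i x * M x j" for i j
      proof -
        have "cnj (M j x) = M x j" using psd_herm[OF psdM, of x j] by simp
        then have "cnj (u j) = M x j / of_real (sqrt r)" by (simp add: u_def)
        then have "u i * cnj (u j) = M i x * M x j / (of_real (sqrt r) * of_real (sqrt r))"
          by (auto simp add: u_def)
        also have "of_real (sqrt r) * of_real (sqrt r) = (of_real r :: complex)"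
          using rpos by (simp flip: of_real_mult)
        finally show ?thesis by simp
      qed
      have M'psd: "psd M'"
        unfolding psd_def
      proof
        fix v :: "'i \<Rightarrow> complex"
        define s where "s = (\<Sum>j\<in>UNIV. M x j * v j)"
        have hx: "M i x = cnj (M x i)" for i using psd_herm[OF psdM, of i x] by simp
        have s2: "(\<Sum>i\<in>UNIV. cnj (v i) * M i x) = cnj s"
          unfolding s_def hx by (simp add: mult.commute)
        have "qf M' v = qf M v - (1 / of_real r) * cnj s * s"
          unfolding M'_def qf_minus_rank1 s2 s_def by simp
        also have "\<dots> = qf M (\<lambda>k. v k + (if k = x then - s / of_real r else 0))"
          unfolding qf_plus_delta s2 s_def[symmetric] Mxx using rpos
          by (simp add: field_simps)
        finally have e: "qf M' v = qf M (\<lambda>k. v k + (if k = x then - s / of_real r else 0))" .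
        show "Im (\<Sum>i\<in>UNIV. \<Sum>j\<in>UNIV. cnj (v i) * M' i j * v j) = 0 \<and>
          0 \<le> Re (\<Sum>i\<in>UNIV. \<Sum>j\<in>UNIV. cnj (v i) * M' i j * v j)"
        proof -
          have "Im (qf M' v) = 0 \<and> Re (qf M' v) \<ge> 0" unfolding e by (rule psdD[OF psdM])
          then show ?thesis unfolding qf_def .
        qed
      qed
      have z1: "M' i j = 0" if "i \<notin> S" for i j
      proof (cases "i = x")
        case True then show ?thesis unfolding M'_def using Mxx rpos by simp
      next
        case False then show ?thesis unfolding M'_def using H that by simp
      qed
      have z2: "M' i j = 0" if "j \<notin> S" for i j
      proof (cases "j = x")
        case True then show ?thesis unfolding M'_def using Mxx rpos by simp
      next
        case False then show ?thesis unfolding M'_def using H that by simp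
      qed
      obtain K and w :: "nat \<Rightarrow> 'i \<Rightarrow> complex" where Kw: "M' = (\<lambda>i j. \<Sum>k<K. w k i * cnj (w k j))"
        using insert.IH[rule_format, of M'] M'psd z1 z2 by blast
      have "M = (\<lambda>i j. \<Sum>k<Suc K. (w(K := u)) k i * cnj ((w(K := u)) k j))"
      proof (intro ext)
        fix i j
        have "M i j = M' i j + u i * cnj (u j)" unfolding M'_def uu by simp
        also have "\<dots> = (\<Sum>k<Suc K. (w(K := u)) k i * cnj ((w(K := u)) k j))"
          unfolding Kw by simp
        finally show "M i j = \<dots>" .
      qed
      then show ?thesis by blast
    qed
  qed
qed

lemma chol:
  fixes M :: "'i::finite cmat"
  assumes "psd M"
  shows "\<exists>K (w :: nat \<Rightarrow> 'i \<Rightarrow> complex). M = (\<lambda>i j. \<Sum>k<K. w k i * cnj (w k j))"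
  using chol_aux[of "UNIV :: 'i set"] assms by simp


definition corr :: "('a::finite \<times> 'b::finite) cmat \<Rightarrow> 'a cmat \<Rightarrow> 'b cmat \<Rightarrow> complex" where
  "corr \<tau> X Y = (\<Sum>a\<in>UNIV. \<Sum>b\<in>UNIV. \<Sum>a2\<in>UNIV. \<Sum>b2\<in>UNIV. \<tau> (a,b) (a2,b2) * X a2 a * cnj (Y b b2))"

definition ip :: "'i::finite cmat \<Rightarrow> 'i cmat \<Rightarrow> 'i cmat \<Rightarrow> complex" where
  "ip M X Z = (\<Sum>i\<in>UNIV. \<Sum>j\<in>UNIV. \<Sum>k\<in>UNIV. M i j * X j k * cnj (Z i k))"

definition mean :: "'i::finite cmat \<Rightarrow> 'i cmat \<Rightarrow> complex" where
  "mean M X = (\<Sum>i\<in>UNIV. \<Sum>j\<in>UNIV. M i j * X j i)"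

lemma sum_UNIV_pair: "(\<Sum>p\<in>(UNIV::('a::finite\<times>'b::finite) set). f p) = (\<Sum>a\<in>UNIV. \<Sum>b\<in>UNIV. f (a,b))"
  using sum.cartesian_product[of "\<lambda>a b. f (a,b)" UNIV UNIV] by simp

lemma mean_eq: "mtrace (mmul M X) = mean M X"
  unfolding mtrace_def mmul_def mean_def ..

lemma ip_eq: "mtrace (mmul M (mmul X (adj Z))) = ip M X Z"
  unfolding mtrace_def mmul_def mean_def ip_def adj_def
  by (simp add: sum_distrib_left mult.assoc)

lemma corr_eq: "mtrace (mmul \<tau> (kron X (adj Y))) = corr \<tau> X Y"
  unfolding mtrace_def mmul_def corr_def kron_def adj_def
  by (simp add: sum_UNIV_pair mult.assoc)

lemma ip_nonneg: assumes "psd M" shows "Im (ip M X X) = 0" "Re (ip M X X) \<ge> 0"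
proof -
  have e: "ip M X X = (\<Sum>k\<in>UNIV. qf M (\<lambda>j. X j k))"
    unfolding ip_def qf_def
    by (subst sum.swap, subst (2) sum.swap) (simp add: sum_distrib_left algebra_simps)
  show "Im (ip M X X) = 0" unfolding e using psdD[OF assms] by (simp add: sum_nonneg)
  show "Re (ip M X X) \<ge> 0" unfolding e using psdD[OF assms] by (simp add: sum_nonneg)
qed

lemma ip_herm: assumes "psd M" shows "ip M W Z = cnj (ip M Z W)"
proof -
  have h: "cnj (M i j) = M j i" for i j using psd_herm[OF assms, of i j] by simp
  have "cnj (ip M Z W) = (\<Sum>i\<in>UNIV. \<Sum>j\<in>UNIV. \<Sum>k\<in>UNIV. M j i * W i k * cnj (Z j k))"
    unfolding ip_def by (simp add: h) (simp add: ac_simps)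
  also have "\<dots> = ip M W Z" unfolding ip_def by (subst sum.swap) simp
  finally show ?thesis by simp
qed

lemma ip_add1: "ip M (\<lambda>i j. X i j + Y i j) Z = ip M X Z + ip M Y Z"
  unfolding ip_def by (simp add: distrib_left distrib_right sum.distrib)
lemma ip_add2: "ip M Z (\<lambda>i j. X i j + Y i j) = ip M Z X + ip M Z Y"
  unfolding ip_def by (simp add: distrib_left distrib_right sum.distrib)
lemma ip_scale1: "ip M (\<lambda>i j. c * X i j) Z = c * ip M X Z"
  unfolding ip_def by (simp add: sum_distrib_left mult.left_commute mult.assoc)
lemma ip_scale2: "ip M Z (\<lambda>i j. c * X i j) = cnj c * ip M Z X"
  unfolding ip_def by (simp add: sum_distrib_left mult.left_commute mult.assoc)

lemma ip_expand: "ip M (\<lambda>i j. Z i j + c * W i j) (\<lambda>i j. Z i j + c * W i j) =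
   ip M Z Z + cnj c * ip M Z W + c * ip M W Z + c * cnj c * ip M W W"
  by (simp add: ip_add1 ip_add2 ip_scale1 ip_scale2 algebra_simps)


lemma quad_real:
  fixes a b d :: real
  assumes H: "\<And>s. 0 \<le> a + 2*s*b + s^2*b*d" and b: "b \<ge> 0" and d: "d \<ge> 0"
  shows "b \<le> a * d"
proof (cases "d = 0")
  case True
  have "b = 0"
  proof (rule ccontr)
    assume "b \<noteq> 0" then have bp: "b > 0" using b by simp
    define s where "s = -(\<bar>a\<bar> + 1) / (2*b)"
    have "0 \<le> a + 2*s*b" using H[of s] True by simp
    also have "2*s*b = -(\<bar>a\<bar> + 1)" unfolding s_def using bp by simp
    finally show False by linarith
  qed
  then show ?thesis using True by simp
next
  case False
  then have dp: "d > 0" using d by simp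
  define s where "s = -1/d"
  have "0 \<le> a + 2*s*b + s^2*b*d" using H[of s] .
  also have "2*s*b = -2*b/d" unfolding s_def by simp
  also have "s^2*b*d = b/d" unfolding s_def using dp by (simp add: power2_eq_square)
  finally have "b / d \<le> a" by simp
  then show ?thesis using pos_divide_le_eq[OF dp] by blast
qed

lemma cs_step:
  fixes A B D :: complex
  assumes H: "\<And>c. Re (A + cnj c * B + c * cnj B + c * cnj c * D) \<ge> 0" and D: "Re D \<ge> 0"
  shows "0 \<le> Re A + 2 * s * (cmod B)^2 + s^2 * (cmod B)^2 * Re D"
proof -
  have "Re (A + cnj (of_real s * B) * B + (of_real s * B) * cnj B + (of_real s * B) * cnj (of_real s * B) * D) \<ge> 0"
    by (rule H)
  also have "cnj (of_real s * B) * B = of_real (s * (cmod B)^2)"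
    by (simp only: complex_cnj_mult complex_cnj_complex_of_real mult.assoc cnj_mult_self of_real_mult)
  also have "(of_real s * B) * cnj B = of_real (s * (cmod B)^2)"
    by (simp only: mult.assoc mult_cnj_self of_real_mult)
  also have "(of_real s * B) * cnj (of_real s * B) * D = of_real (s^2 * (cmod B)^2) * D"
    by (simp only: complex_cnj_mult complex_cnj_complex_of_real mult.assoc mult.left_commute[of B] mult_cnj_self of_real_mult power2_eq_square)
  finally have "0 \<le> Re (A + of_real (s * (cmod B)^2) + of_real (s * (cmod B)^2) + of_real (s^2 * (cmod B)^2) * D)" .
  then show ?thesis by simp
qed

lemma cs_abstract:
  fixes A B D :: complex
  assumes H: "\<And>c. Re (A + cnj c * B + c * cnj B + c * cnj c * D) \<ge> 0" and D: "Re D \<ge> 0"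
  shows "(cmod B)^2 \<le> Re A * Re D"
  by (rule quad_real[OF cs_step[OF H D]], simp, rule D)

lemma ip_cs:
  assumes "psd M"
  shows "(cmod (ip M Z W))^2 \<le> Re (ip M Z Z) * Re (ip M W W)"
proof (rule cs_abstract)
  fix c
  show "Re (ip M Z Z + cnj c * ip M Z W + c * cnj (ip M Z W) + c * cnj c * ip M W W) \<ge> 0"
    using ip_nonneg(2)[OF assms, of "\<lambda>i j. Z i j + c * W i j"]
    unfolding ip_expand ip_herm[OF assms, of W Z] .
qed (rule ip_nonneg(2)[OF assms])


definition kI :: "'a cmat \<Rightarrow> ('a \<times> 'b) cmat" where
  "kI X = (\<lambda>i j. X (fst i) (fst j) * (if snd i = snd j then 1 else 0))"
definition Ik :: "'b cmat \<Rightarrow> ('a \<times> 'b) cmat" where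
  "Ik Y = (\<lambda>i j. (if fst i = fst j then 1 else 0) * Y (snd i) (snd j))"

lemma ip_kI_Ik: "ip \<tau> (kI X) (Ik Y) = corr \<tau> X Y"
  unfolding ip_def corr_def kI_def Ik_def sum_UNIV_pair
  by (simp only: fst_conv snd_conv cnj_if mult_if0 if0_mult if_sum0 sum.delta sum.delta' finite UNIV_I if_True
      complex_cnj_one mult_1_right mult_1_left mult.assoc)


lemma sum4_rot: "(\<Sum>a\<in>A. \<Sum>b\<in>B. \<Sum>c\<in>C. \<Sum>d\<in>D. f a b c d) = (\<Sum>b\<in>B. \<Sum>c\<in>C. \<Sum>d\<in>D. \<Sum>a\<in>A. f a b c d)"
  by (subst sum.swap, rule sum.cong[OF refl], subst sum.swap, rule sum.cong[OF refl], subst sum.swap, rule refl)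

lemma ip_kI: "ip \<tau> (kI X) (kI X) = ip (red_A \<tau>) X X"
proof -
  have "ip \<tau> (kI X) (kI X) = (\<Sum>a\<in>UNIV. \<Sum>b\<in>UNIV. \<Sum>a2\<in>UNIV. \<Sum>a3\<in>UNIV.
      \<tau> (a,b) (a2,b) * X a2 a3 * cnj (X a a3))"
    unfolding ip_def kI_def sum_UNIV_pair
    by (simp only: fst_conv snd_conv cnj_if mult_if0 if0_mult if_sum0 sum.delta sum.delta' finite UNIV_I if_True
      complex_cnj_one mult_1_right mult_1_left mult.assoc)
  also have "\<dots> = ip (red_A \<tau>) X X"
    unfolding ip_def red_A_def sum_distrib_right
    by (rule sum.cong[OF refl], subst sum.swap, rule sum.cong[OF refl], subst sum.swap, simp)
  finally show ?thesis .
qed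

lemma ip_Ik: "ip \<tau> (Ik Y) (Ik Y) = ip (red_B \<tau>) Y Y"
proof -
  have "ip \<tau> (Ik Y) (Ik Y) = (\<Sum>a\<in>UNIV. \<Sum>b\<in>UNIV. \<Sum>b2\<in>UNIV. \<Sum>b3\<in>UNIV.
      \<tau> (a,b) (a,b2) * Y b2 b3 * cnj (Y b b3))"
    unfolding ip_def Ik_def sum_UNIV_pair
    by (simp only: fst_conv snd_conv cnj_if mult_if0 if0_mult if_sum0 sum.delta sum.delta' finite UNIV_I if_True
      complex_cnj_one mult_1_right mult_1_left mult.assoc)
  also have "\<dots> = ip (red_B \<tau>) Y Y"
    unfolding ip_def red_B_def sum_distrib_right by (rule sum4_rot)
  finally show ?thesis .
qed


lemma corr_cs: assumes "psd \<tau>"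
  shows "(cmod (corr \<tau> X Y))^2 \<le> Re (ip (red_A \<tau>) X X) * Re (ip (red_B \<tau>) Y Y)"
  using ip_cs[OF assms, of "kI X" "Ik Y"] unfolding ip_kI_Ik ip_kI ip_Ik .

lemma ipA_real: assumes "psd \<tau>"
  shows "ip (red_A \<tau>) X X = of_real (Re (ip (red_A \<tau>) X X))" "Re (ip (red_A \<tau>) X X) \<ge> 0"
  using ip_nonneg[OF assms, of "kI X"] unfolding ip_kI by (simp_all add: complex_eq_iff)

lemma ipB_real: assumes "psd \<tau>"
  shows "ip (red_B \<tau>) Y Y = of_real (Re (ip (red_B \<tau>) Y Y))" "Re (ip (red_B \<tau>) Y Y) \<ge> 0"
  using ip_nonneg[OF assms, of "Ik Y"] unfolding ip_Ik by (simp_all add: complex_eq_iff)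

definition adm :: "('a::finite \<times> 'b::finite) cmat \<Rightarrow> 'a cmat \<Rightarrow> 'b cmat \<Rightarrow> bool" where
  "adm \<tau> X Y \<longleftrightarrow> mean (red_A \<tau>) X = 0 \<and> mean (red_B \<tau>) Y = 0 \<and>
     ip (red_A \<tau>) X X = 1 \<and> ip (red_B \<tau>) Y Y = 1"

definition cset :: "('a::finite \<times> 'b::finite) cmat \<Rightarrow> real set" where
  "cset \<tau> = {cmod (corr \<tau> X Y) | X Y. adm \<tau> X Y} \<union> {0}"

lemma max_corr_cset: "max_corr \<tau> = Sup (cset \<tau>)"
  unfolding max_corr_def cset_def adm_def corr_eq ip_eq unfolding mean_eq ..

lemma cset_le1: assumes "psd \<tau>" "x \<in> cset \<tau>" shows "x \<le> 1"
proof -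
  consider "x = 0" | X Y where "x = cmod (corr \<tau> X Y)" "adm \<tau> X Y"
    using assms(2) unfolding cset_def by blast
  then show ?thesis
  proof cases
    case 2
    have "x^2 \<le> 1" using corr_cs[OF assms(1), of X Y] 2 unfolding adm_def by simp
    then show ?thesis using power2_le_imp_le[of x 1] by simp
  qed simp
qed

lemma cset_bdd: assumes "psd \<tau>" shows "bdd_above (cset \<tau>)"
  by (rule bdd_aboveI[of _ 1]) (rule cset_le1[OF assms])

lemma max_corr_nonneg: assumes "psd \<tau>" shows "max_corr \<tau> \<ge> 0"
  unfolding max_corr_cset by (rule cSup_upper[OF _ cset_bdd[OF assms]]) (simp add: cset_def)

lemma max_corr_le1: assumes "psd \<tau>" shows "max_corr \<tau> \<le> 1"
  unfolding max_corr_cset by (rule cSup_least, simp add: cset_def, rule cset_le1[OF assms])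

lemma max_corr_upper: assumes "psd \<tau>" "adm \<tau> X Y" shows "cmod (corr \<tau> X Y) \<le> max_corr \<tau>"
  unfolding max_corr_cset by (rule cSup_upper[OF _ cset_bdd[OF assms(1)]]) (use assms(2) in \<open>auto simp: cset_def\<close>)

lemma mean_scale: "mean M (\<lambda>i j. c * X i j) = c * mean M X"
  unfolding mean_def by (simp add: sum_distrib_left mult.left_commute)

lemma corr_scale: "corr \<tau> (\<lambda>i j. c * X i j) (\<lambda>i j. d * Y i j) = c * cnj d * corr \<tau> X Y"
  unfolding corr_def by (simp add: sum_distrib_left mult_ac)

lemma max_corr_scaled:
  assumes "psd \<tau>" "mean (red_A \<tau>) X = 0" "mean (red_B \<tau>) Y = 0"
  shows "cmod (corr \<tau> X Y) \<le> max_corr \<tau> * sqrt (Re (ip (red_A \<tau>) X X)) * sqrt (Re (ip (red_B \<tau>) Y Y))"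
proof -
  define nx where "nx = sqrt (Re (ip (red_A \<tau>) X X))"
  define ny where "ny = sqrt (Re (ip (red_B \<tau>) Y Y))"
  have nx0: "nx \<ge> 0" "nx^2 = Re (ip (red_A \<tau>) X X)" unfolding nx_def using ipA_real(2)[OF assms(1)] by auto
  have ny0: "ny \<ge> 0" "ny^2 = Re (ip (red_B \<tau>) Y Y)" unfolding ny_def using ipB_real(2)[OF assms(1)] by auto
  have mc: "max_corr \<tau> \<ge> 0" by (rule max_corr_nonneg[OF assms(1)])
  show ?thesis
  proof (cases "nx = 0 \<or> ny = 0")
    case True
    have "(cmod (corr \<tau> X Y))^2 \<le> nx^2 * ny^2" using corr_cs[OF assms(1), of X Y] nx0 ny0 by simp
    then have "(cmod (corr \<tau> X Y))^2 \<le> 0" using True by auto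
    then have "cmod (corr \<tau> X Y) \<le> 0" using power2_le_imp_le[of "cmod (corr \<tau> X Y)" 0] by simp
    then have "cmod (corr \<tau> X Y) = 0" using norm_ge_zero[of "corr \<tau> X Y"] by linarith
    then show ?thesis using mc nx0 ny0 unfolding nx_def[symmetric] ny_def[symmetric] by simp
  next
    case False
    then have nxp: "nx > 0" and nyp: "ny > 0" using nx0 ny0 by auto
    define X' where "X' = (\<lambda>i j. of_real (1/nx) * X i j)"
    define Y' where "Y' = (\<lambda>i j. of_real (1/ny) * Y i j)"
    have "adm \<tau> X' Y'"
      unfolding adm_def
    proof (intro conjI)
      show "mean (red_A \<tau>) X' = 0" unfolding X'_def mean_scale assms(2) by simp
      show "mean (red_B \<tau>) Y' = 0" unfolding Y'_def mean_scale assms(3) by simp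
      have "ip (red_A \<tau>) X' X' = of_real (1/nx) * of_real (1/nx) * ip (red_A \<tau>) X X"
        unfolding X'_def ip_scale1 ip_scale2 by simp
      also have "\<dots> = of_real ((1/nx) * (1/nx) * nx^2)"
        by (subst ipA_real(1)[OF assms(1)]) (simp add: nx0(2))
      also have "\<dots> = 1" using nxp by (simp add: power2_eq_square)
      finally show "ip (red_A \<tau>) X' X' = 1" .
      have "ip (red_B \<tau>) Y' Y' = of_real (1/ny) * of_real (1/ny) * ip (red_B \<tau>) Y Y"
        unfolding Y'_def ip_scale1 ip_scale2 by simp
      also have "\<dots> = of_real ((1/ny) * (1/ny) * ny^2)"
        by (subst ipB_real(1)[OF assms(1)]) (simp add: ny0(2))
      also have "\<dots> = 1" using nyp by (simp add: power2_eq_square)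
      finally show "ip (red_B \<tau>) Y' Y' = 1" .
    qed
    then have "cmod (corr \<tau> X' Y') \<le> max_corr \<tau>" by (rule max_corr_upper[OF assms(1)])
    moreover have "corr \<tau> X' Y' = of_real (1/(nx*ny)) * corr \<tau> X Y"
      unfolding X'_def Y'_def corr_scale by simp
    moreover have "cmod (of_real (1/(nx*ny)) * corr \<tau> X Y) = \<bar>1/(nx*ny)\<bar> * cmod (corr \<tau> X Y)"
      by (simp only: norm_mult norm_of_real)
    moreover have "\<bar>1/(nx*ny)\<bar> * cmod (corr \<tau> X Y) = cmod (corr \<tau> X Y) / (nx*ny)"
      using nxp nyp by simp
    ultimately have "cmod (corr \<tau> X Y) / (nx*ny) \<le> max_corr \<tau>"
      by metis
    then have "cmod (corr \<tau> X Y) \<le> max_corr \<tau> * (nx * ny)"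
      using nxp nyp by (simp add: pos_divide_le_eq)
    then show ?thesis unfolding nx_def ny_def by (simp add: mult.assoc)
  qed
qed


definition blk :: "('a \<times> 'c) cmat \<Rightarrow> 'c \<Rightarrow> 'c \<Rightarrow> 'a cmat" where
  "blk X c c2 = (\<lambda>a a2. X (a,c) (a2,c2))"

lemma corr_tensor:
  fixes \<tau> :: "('a::finite \<times> 'b::finite) cmat" and \<omega> :: "('c::finite \<times> 'd::finite) cmat"
  shows "corr (state_tensor \<tau> \<omega>) X Y =
    (\<Sum>c\<in>UNIV. \<Sum>d\<in>UNIV. \<Sum>c2\<in>UNIV. \<Sum>d2\<in>UNIV. \<omega> (c,d) (c2,d2) * corr \<tau> (blk X c2 c) (blk Y d d2))"
proof -
  have l: "corr (state_tensor \<tau> \<omega>) X Y = (\<Sum>t\<in>UNIV. (\<lambda>(a,c,b,d,a2,c2,b2,d2).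
      \<tau> (a,b) (a2,b2) * \<omega> (c,d) (c2,d2) * X (a2,c2) (a,c) * cnj (Y (b,d) (b2,d2))) t)"
    unfolding corr_def state_tensor_def by (simp only: sum_UNIV_pair prod.case)
  have r: "(\<Sum>c\<in>UNIV. \<Sum>d\<in>UNIV. \<Sum>c2\<in>UNIV. \<Sum>d2\<in>UNIV. \<omega> (c,d) (c2,d2) * corr \<tau> (blk X c2 c) (blk Y d d2))
     = (\<Sum>t\<in>UNIV. (\<lambda>(c,d,c2,d2,a,b,a2,b2).
      \<tau> (a,b) (a2,b2) * \<omega> (c,d) (c2,d2) * X (a2,c2) (a,c) * cnj (Y (b,d) (b2,d2))) t)"
    unfolding corr_def blk_def by (simp only: sum_UNIV_pair prod.case sum_distrib_left mult_ac)
  show ?thesis unfolding l r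
    by (rule sum.reindex_bij_witness[where j = "\<lambda>(a,c,b,d,a2,c2,b2,d2). (c,d,c2,d2,a,b,a2,b2)"
        and i = "\<lambda>(c,d,c2,d2,a,b,a2,b2). (a,c,b,d,a2,c2,b2,d2)"]) auto
qed


lemma redA_tensor: "red_A (state_tensor \<tau> \<omega>) = (\<lambda>i j. red_A \<tau> (fst i) (fst j) * red_A \<omega> (snd i) (snd j))"
  unfolding red_A_def state_tensor_def
  by (intro ext) (simp add: sum_UNIV_pair sum_product split_beta)

lemma redB_tensor: "red_B (state_tensor \<tau> \<omega>) = (\<lambda>i j. red_B \<tau> (fst i) (fst j) * red_B \<omega> (snd i) (snd j))"
  unfolding red_B_def state_tensor_def
  by (intro ext) (simp add: sum_UNIV_pair sum_product split_beta)

lemma mean_kron: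
  "mean (\<lambda>i j. m (fst i) (fst j) * m' (snd i) (snd j)) X =
   (\<Sum>c\<in>UNIV. \<Sum>c2\<in>UNIV. m' c c2 * mean m (blk X c2 c))"
proof -
  have l: "mean (\<lambda>i j. m (fst i) (fst j) * m' (snd i) (snd j)) X = (\<Sum>t\<in>UNIV. (\<lambda>(a,c,a2,c2).
      m a a2 * m' c c2 * X (a2,c2) (a,c)) t)"
    unfolding mean_def by (simp only: sum_UNIV_pair prod.case fst_conv snd_conv)
  have r: "(\<Sum>c\<in>UNIV. \<Sum>c2\<in>UNIV. m' c c2 * mean m (blk X c2 c)) = (\<Sum>t\<in>UNIV. (\<lambda>(c,c2,a,a2).
      m a a2 * m' c c2 * X (a2,c2) (a,c)) t)"
    unfolding mean_def blk_def by (simp only: sum_UNIV_pair prod.case sum_distrib_left mult_ac)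
  show ?thesis unfolding l r
    by (rule sum.reindex_bij_witness[where j = "\<lambda>(a,c,a2,c2). (c,c2,a,a2)"
        and i = "\<lambda>(c,c2,a,a2). (a,c,a2,c2)"]) auto
qed

lemma ip_kron:
  "ip (\<lambda>i j. m (fst i) (fst j) * m' (snd i) (snd j)) X Z =
   (\<Sum>c\<in>UNIV. \<Sum>c2\<in>UNIV. \<Sum>c3\<in>UNIV. m' c c2 * ip m (blk X c2 c3) (blk Z c c3))"
proof -
  have l: "ip (\<lambda>i j. m (fst i) (fst j) * m' (snd i) (snd j)) X Z = (\<Sum>t\<in>UNIV. (\<lambda>(a,c,a2,c2,a3,c3).
      m a a2 * m' c c2 * X (a2,c2) (a3,c3) * cnj (Z (a,c) (a3,c3))) t)"
    unfolding ip_def by (simp only: sum_UNIV_pair prod.case fst_conv snd_conv)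
  have r: "(\<Sum>c\<in>UNIV. \<Sum>c2\<in>UNIV. \<Sum>c3\<in>UNIV. m' c c2 * ip m (blk X c2 c3) (blk Z c c3)) =
      (\<Sum>t\<in>UNIV. (\<lambda>(c,c2,c3,a,a2,a3).
      m a a2 * m' c c2 * X (a2,c2) (a3,c3) * cnj (Z (a,c) (a3,c3))) t)"
    unfolding ip_def blk_def by (simp only: sum_UNIV_pair prod.case sum_distrib_left mult_ac)
  show ?thesis unfolding l r
    by (rule sum.reindex_bij_witness[where j = "\<lambda>(a,c,a2,c2,a3,c3). (c,c2,c3,a,a2,a3)"
        and i = "\<lambda>(c,c2,c3,a,a2,a3). (a,c,a2,c2,a3,c3)"]) auto
qed


lemma corr_sum:
  fixes s :: "'i::finite \<Rightarrow> complex" and t :: "'j::finite \<Rightarrow> complex"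
  shows "corr \<tau> (\<lambda>a a2. \<Sum>i\<in>UNIV. s i * U i a a2) (\<lambda>b b2. \<Sum>j\<in>UNIV. t j * V j b b2) =
    (\<Sum>i\<in>UNIV. \<Sum>j\<in>UNIV. s i * cnj (t j) * corr \<tau> (U i) (V j))"
proof -
  have l: "corr \<tau> (\<lambda>a a2. \<Sum>i\<in>UNIV. s i * U i a a2) (\<lambda>b b2. \<Sum>j\<in>UNIV. t j * V j b b2) =
    (\<Sum>x\<in>UNIV. (\<lambda>(a,b,a2,b2,i,j). \<tau> (a,b) (a2,b2) * s i * U i a2 a * cnj (t j) * cnj (V j b b2)) x)"
    unfolding corr_def by (simp only: sum_UNIV_pair prod.case cnj_sum complex_cnj_mult sum_distrib_left sum_distrib_right mult_ac)
  have r: "(\<Sum>i\<in>UNIV. \<Sum>j\<in>UNIV. s i * cnj (t j) * corr \<tau> (U i) (V j)) =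
    (\<Sum>x\<in>UNIV. (\<lambda>(i,j,a,b,a2,b2). \<tau> (a,b) (a2,b2) * s i * U i a2 a * cnj (t j) * cnj (V j b b2)) x)"
    unfolding corr_def by (simp only: sum_UNIV_pair prod.case sum_distrib_left mult_ac)
  show ?thesis unfolding l r
    by (rule sum.reindex_bij_witness[where j = "\<lambda>(a,b,a2,b2,i,j). (i,j,a,b,a2,b2)"
        and i = "\<lambda>(i,j,a,b,a2,b2). (a,b,a2,b2,i,j)"]) auto
qed

lemma ip_sum:
  fixes s :: "'i::finite \<Rightarrow> complex" and t :: "'j::finite \<Rightarrow> complex"
  shows "ip M (\<lambda>a a2. \<Sum>i\<in>UNIV. s i * U i a a2) (\<lambda>b b2. \<Sum>j\<in>UNIV. t j * V j b b2) =
    (\<Sum>i\<in>UNIV. \<Sum>j\<in>UNIV. s i * cnj (t j) * ip M (U i) (V j))"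
proof -
  have l: "ip M (\<lambda>a a2. \<Sum>i\<in>UNIV. s i * U i a a2) (\<lambda>b b2. \<Sum>j\<in>UNIV. t j * V j b b2) =
    (\<Sum>x\<in>UNIV. (\<lambda>(a,b,c,i,j). M a b * s i * U i b c * cnj (t j) * cnj (V j a c)) x)"
    unfolding ip_def by (simp only: sum_UNIV_pair prod.case cnj_sum complex_cnj_mult sum_distrib_left sum_distrib_right mult_ac)
  have r: "(\<Sum>i\<in>UNIV. \<Sum>j\<in>UNIV. s i * cnj (t j) * ip M (U i) (V j)) =
    (\<Sum>x\<in>UNIV. (\<lambda>(i,j,a,b,c). M a b * s i * U i b c * cnj (t j) * cnj (V j a c)) x)"
    unfolding ip_def by (simp only: sum_UNIV_pair prod.case sum_distrib_left mult_ac)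
  show ?thesis unfolding l r
    by (rule sum.reindex_bij_witness[where j = "\<lambda>(a,b,c,i,j). (i,j,a,b,c)"
        and i = "\<lambda>(i,j,a,b,c). (a,b,c,i,j)"]) auto
qed

lemma mean_sum:
  fixes s :: "'i::finite \<Rightarrow> complex"
  shows "mean M (\<lambda>a a2. \<Sum>i\<in>UNIV. s i * U i a a2) = (\<Sum>i\<in>UNIV. s i * mean M (U i))"
proof -
  have l: "mean M (\<lambda>a a2. \<Sum>i\<in>UNIV. s i * U i a a2) =
    (\<Sum>x\<in>UNIV. (\<lambda>(a,b,i). M a b * s i * U i b a) x)"
    unfolding mean_def by (simp only: sum_UNIV_pair prod.case sum_distrib_left mult_ac)
  have r: "(\<Sum>i\<in>UNIV. s i * mean M (U i)) =
    (\<Sum>x\<in>UNIV. (\<lambda>(i,a,b). M a b * s i * U i b a) x)"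
    unfolding mean_def by (simp only: sum_UNIV_pair prod.case sum_distrib_left mult_ac)
  show ?thesis unfolding l r
    by (rule sum.reindex_bij_witness[where j = "\<lambda>(a,b,i). (i,a,b)"
        and i = "\<lambda>(i,a,b). (a,b,i)"]) auto
qed


definition idm :: "'a cmat" where "idm = (\<lambda>a a2. if a = a2 then 1 else 0)"

lemma corr_diff1: "corr \<tau> (\<lambda>i j. U i j - W i j) V = corr \<tau> U V - corr \<tau> W V"
  unfolding corr_def by (simp add: algebra_simps sum_subtractf)
lemma corr_diff2: "corr \<tau> U (\<lambda>i j. V i j - W i j) = corr \<tau> U V - corr \<tau> U W"
  unfolding corr_def by (simp add: algebra_simps sum_subtractf)
lemma corr_scale1: "corr \<tau> (\<lambda>i j. c * U i j) V = c * corr \<tau> U V"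
  using corr_scale[of \<tau> c U 1 V] by simp
lemma corr_scale2: "corr \<tau> U (\<lambda>i j. c * V i j) = cnj c * corr \<tau> U V"
  using corr_scale[of \<tau> 1 U c V] by simp

lemma ip_diff1: "ip M (\<lambda>i j. U i j - W i j) V = ip M U V - ip M W V"
  unfolding ip_def by (simp add: algebra_simps sum_subtractf)
lemma ip_diff2: "ip M U (\<lambda>i j. V i j - W i j) = ip M U V - ip M U W"
  unfolding ip_def by (simp add: algebra_simps sum_subtractf)
lemma mean_diff: "mean M (\<lambda>i j. U i j - W i j) = mean M U - mean M W"
  unfolding mean_def by (simp add: algebra_simps sum_subtractf)

lemma corr_decomp: "corr \<tau> (\<lambda>a a2. U a a2 - s * idm a a2) (\<lambda>b b2. V b b2 - t * idm b b2) =
  corr \<tau> U V - cnj t * corr \<tau> U idm - s * corr \<tau> idm V + s * cnj t * corr \<tau> idm idm"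
  by (simp add: corr_diff1 corr_diff2 corr_scale1 corr_scale2 algebra_simps)

lemma ip_decomp: "ip M (\<lambda>a a2. U a a2 - s * idm a a2) (\<lambda>b b2. V b b2 - t * idm b b2) =
  ip M U V - cnj t * ip M U idm - s * ip M idm V + s * cnj t * ip M idm idm"
  by (simp add: ip_diff1 ip_diff2 ip_scale1 ip_scale2 algebra_simps)

lemma mean_decomp: "mean M (\<lambda>a a2. U a a2 - s * idm a a2) = mean M U - s * mean M idm"
  by (simp add: mean_diff mean_scale)

lemma mean_idm: "mean M idm = (\<Sum>i\<in>UNIV. M i i)"
  unfolding mean_def idm_def by (simp only: cnj_if mult_if0 if0_mult if_sum0 sum.delta sum.delta' finite UNIV_I if_True complex_cnj_one complex_cnj_zero mult_1_right mult_1_left mult_zero_right mult_zero_left)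

lemma ip_idm2: "ip M U idm = mean M U"
  unfolding mean_def ip_def idm_def by (simp only: cnj_if mult_if0 if0_mult if_sum0 sum.delta sum.delta' finite UNIV_I if_True complex_cnj_one complex_cnj_zero mult_1_right mult_1_left mult_zero_right mult_zero_left)

lemma ip_idm_idm: "ip M idm idm = (\<Sum>i\<in>UNIV. M i i)"
  unfolding ip_idm2 mean_idm ..

lemma ip_idm1: assumes "\<And>i j. cnj (M i j) = M j i" shows "ip M idm V = cnj (mean M V)"
proof -
  have "ip M idm V = (\<Sum>i\<in>UNIV. \<Sum>j\<in>UNIV. M i j * cnj (V i j))"
    unfolding ip_def idm_def by (simp only: cnj_if mult_if0 if0_mult if_sum0 sum.delta sum.delta' finite UNIV_I if_True complex_cnj_one complex_cnj_zero mult_1_right mult_1_left mult_zero_right mult_zero_left)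
  also have "\<dots> = cnj (\<Sum>i\<in>UNIV. \<Sum>j\<in>UNIV. M j i * V i j)"
    by (simp add: cnj_sum assms)
  also have "\<dots> = cnj (mean M V)" unfolding mean_def by (subst sum.swap) (rule refl)
  finally show ?thesis .
qed

lemma psd_herm': assumes "psd M" shows "cnj (M i j) = M j i"
  using psd_herm[OF assms, of i j] by simp
lemma redA_herm: assumes "psd \<tau>" shows "cnj (red_A \<tau> i j) = red_A \<tau> j i"
  unfolding red_A_def by (simp add: cnj_sum psd_herm'[OF assms])
lemma redB_herm: assumes "psd \<tau>" shows "cnj (red_B \<tau> i j) = red_B \<tau> j i"
  unfolding red_B_def by (simp add: cnj_sum psd_herm'[OF assms])

lemma trace_redA: "(\<Sum>i\<in>UNIV. red_A \<tau> i i) = mtrace \<tau>"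
  unfolding red_A_def mtrace_def sum_UNIV_pair ..
lemma trace_redB: "(\<Sum>i\<in>UNIV. red_B \<tau> i i) = mtrace \<tau>"
  unfolding red_B_def mtrace_def sum_UNIV_pair by (rule sum.swap)

lemma corr_idm2: "corr \<tau> U idm = mean (red_A \<tau>) U"
proof -
  have "corr \<tau> U idm = (\<Sum>a\<in>UNIV. \<Sum>b\<in>UNIV. \<Sum>a2\<in>UNIV. \<tau> (a,b) (a2,b) * U a2 a)"
    unfolding corr_def idm_def by (simp only: cnj_if mult_if0 if0_mult if_sum0 sum.delta sum.delta' finite UNIV_I if_True complex_cnj_one complex_cnj_zero mult_1_right mult_1_left mult_zero_right mult_zero_left)
  also have "\<dots> = mean (red_A \<tau>) U"
    unfolding mean_def red_A_def sum_distrib_right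
    by (rule sum.cong[OF refl], rule sum.swap)
  finally show ?thesis .
qed

lemma corr_idm1: assumes "psd \<tau>" shows "corr \<tau> idm V = cnj (mean (red_B \<tau>) V)"
proof -
  have h: "cnj (\<tau> i j) = \<tau> j i" for i j using psd_herm[OF assms, of i j] by simp
  have "corr \<tau> idm V = (\<Sum>a\<in>UNIV. \<Sum>b\<in>UNIV. \<Sum>b2\<in>UNIV. \<tau> (a,b) (a,b2) * cnj (V b b2))"
    unfolding corr_def idm_def by (simp only: cnj_if mult_if0 if0_mult if_sum0 sum.delta sum.delta' finite UNIV_I if_True complex_cnj_one complex_cnj_zero mult_1_right mult_1_left mult_zero_right mult_zero_left)
  also have "\<dots> = (\<Sum>b\<in>UNIV. \<Sum>b2\<in>UNIV. \<Sum>a\<in>UNIV. \<tau> (a,b) (a,b2) * cnj (V b b2))"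
    by (subst sum.swap, rule sum.cong[OF refl], rule sum.swap)
  also have "\<dots> = cnj (mean (red_B \<tau>) V)"
    unfolding mean_def red_B_def cnj_sum complex_cnj_mult h sum_distrib_right
    by (subst (2) sum.swap) (rule refl)
  finally show ?thesis .
qed

lemma corr_idm_idm: "corr \<tau> idm idm = mtrace \<tau>"
  unfolding corr_idm2 mean_idm trace_redA ..


lemma psd_tensor:
  fixes \<tau> :: "('a::finite \<times> 'b::finite) cmat" and \<omega> :: "('c::finite \<times> 'd::finite) cmat"
  assumes pt: "psd \<tau>" and po: "psd \<omega>"
  shows "psd (state_tensor \<tau> \<omega>)"
proof -
  obtain K and w :: "nat \<Rightarrow> ('c \<times> 'd) \<Rightarrow> complex" where Kw: "\<omega> = (\<lambda>i j. \<Sum>k<K. w k i * cnj (w k j))"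
    using chol[OF po] by blast
  have key: "qf (state_tensor \<tau> \<omega>) v = (\<Sum>k<K. qf \<tau> (\<lambda>(a,b). \<Sum>c\<in>UNIV. \<Sum>d\<in>UNIV. cnj (w k (c,d)) * v ((a,c),(b,d))))"
    for v
  proof -
    have l: "qf (state_tensor \<tau> \<omega>) v = (\<Sum>t\<in>UNIV. \<Sum>k<K. (\<lambda>(a,c,b,d,a2,c2,b2,d2).
       cnj (v ((a,c),(b,d))) * \<tau> (a,b) (a2,b2) * w k (c,d) * cnj (w k (c2,d2)) * v ((a2,c2),(b2,d2))) t)"
      unfolding qf_def state_tensor_def Kw
      by (simp only: sum_UNIV_pair prod.case sum_distrib_left sum_distrib_right mult_ac)
    have r: "(\<Sum>k<K. qf \<tau> (\<lambda>(a,b). \<Sum>c\<in>UNIV. \<Sum>d\<in>UNIV. cnj (w k (c,d)) * v ((a,c),(b,d)))) =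
       (\<Sum>k<K. \<Sum>t\<in>UNIV. (\<lambda>(a,b,a2,b2,c2,d2,c,d).
       cnj (v ((a,c),(b,d))) * \<tau> (a,b) (a2,b2) * w k (c,d) * cnj (w k (c2,d2)) * v ((a2,c2),(b2,d2))) t)"
      unfolding qf_def
      by (simp only: sum_UNIV_pair prod.case cnj_sum complex_cnj_mult complex_cnj_cnj sum_distrib_left sum_distrib_right mult_ac)
    show ?thesis unfolding l r
      apply (subst sum.swap)
      apply (rule sum.cong[OF refl])
      apply (rule sum.reindex_bij_witness[where j = "\<lambda>(a,c,b,d,a2,c2,b2,d2). (a,b,a2,b2,c2,d2,c,d)"
        and i = "\<lambda>(a,b,a2,b2,c2,d2,c,d). (a,c,b,d,a2,c2,b2,d2)"])
      by auto
  qed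
  show ?thesis unfolding psd_def
  proof
    fix v
    have "Im (qf (state_tensor \<tau> \<omega>) v) = 0 \<and> Re (qf (state_tensor \<tau> \<omega>) v) \<ge> 0"
      unfolding key using psdD[OF pt] by (simp add: sum_nonneg)
    then show "Im (\<Sum>i\<in>UNIV. \<Sum>j\<in>UNIV. cnj (v i) * state_tensor \<tau> \<omega> i j * v j) = 0 \<and>
        0 \<le> Re (\<Sum>i\<in>UNIV. \<Sum>j\<in>UNIV. cnj (v i) * state_tensor \<tau> \<omega> i j * v j)"
      unfolding qf_def .
  qed
qed


definition Pk :: "(nat \<Rightarrow> ('c \<times> 'd) \<Rightarrow> complex) \<Rightarrow> ('a \<times> 'c::finite) cmat \<Rightarrow> nat \<Rightarrow> 'c \<Rightarrow> 'd \<Rightarrow> 'a cmat" where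
  "Pk w X k c d2 = (\<lambda>a a2. \<Sum>c2\<in>UNIV. cnj (w k (c2,d2)) * blk X c2 c a a2)"
definition Qk :: "(nat \<Rightarrow> ('c \<times> 'd) \<Rightarrow> complex) \<Rightarrow> ('b \<times> 'd::finite) cmat \<Rightarrow> nat \<Rightarrow> 'c \<Rightarrow> 'd \<Rightarrow> 'b cmat" where
  "Qk w Y k c d2 = (\<lambda>b b2. \<Sum>d\<in>UNIV. cnj (w k (c,d)) * blk Y d d2 b b2)"

lemma E1:
  fixes \<tau> :: "('a::finite \<times> 'b::finite) cmat" and \<omega> :: "('c::finite \<times> 'd::finite) cmat"
  assumes Kw: "\<omega> = (\<lambda>i j. \<Sum>k<K. w k i * cnj (w k j))"
  shows "corr (state_tensor \<tau> \<omega>) X Y = (\<Sum>k<K. \<Sum>c\<in>UNIV. \<Sum>d2\<in>UNIV. corr \<tau> (Pk w X k c d2) (Qk w Y k c d2))"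
proof -
  have l: "corr (state_tensor \<tau> \<omega>) X Y = (\<Sum>t\<in>UNIV. \<Sum>k<K. (\<lambda>(c,d,c2,d2).
     w k (c,d) * cnj (w k (c2,d2)) * corr \<tau> (blk X c2 c) (blk Y d d2)) t)"
    unfolding corr_tensor Kw by (simp only: sum_UNIV_pair prod.case sum_distrib_left sum_distrib_right mult_ac)
  have r: "(\<Sum>k<K. \<Sum>c\<in>UNIV. \<Sum>d2\<in>UNIV. corr \<tau> (Pk w X k c d2) (Qk w Y k c d2)) =
     (\<Sum>k<K. \<Sum>t\<in>UNIV. (\<lambda>(c,d2,c2,d).
     w k (c,d) * cnj (w k (c2,d2)) * corr \<tau> (blk X c2 c) (blk Y d d2)) t)"
    unfolding Pk_def Qk_def corr_sum
    by (simp only: sum_UNIV_pair prod.case complex_cnj_cnj sum_distrib_left sum_distrib_right mult_ac)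
  show ?thesis unfolding l r
    apply (subst sum.swap)
    apply (rule sum.cong[OF refl])
    apply (rule sum.reindex_bij_witness[where j = "\<lambda>(c,d,c2,d2). (c,d2,c2,d)"
        and i = "\<lambda>(c,d2,c2,d). (c,d,c2,d2)"])
    by auto
qed


lemma E3:
  fixes \<tau> :: "('a::finite \<times> 'b::finite) cmat" and \<omega> :: "('c::finite \<times> 'd::finite) cmat"
  assumes Kw: "\<omega> = (\<lambda>i j. \<Sum>k<K. w k i * cnj (w k j))"
  shows "ip (red_A (state_tensor \<tau> \<omega>)) X X = (\<Sum>k<K. \<Sum>c\<in>UNIV. \<Sum>d2\<in>UNIV. ip (red_A \<tau>) (Pk w X k c d2) (Pk w X k c d2))"
proof -
  have l: "ip (red_A (state_tensor \<tau> \<omega>)) X X = (\<Sum>t\<in>UNIV. \<Sum>k<K. (\<lambda>(c,c2,c3,d).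
     w k (c,d) * cnj (w k (c2,d)) * ip (red_A \<tau>) (blk X c2 c3) (blk X c c3)) t)"
    unfolding redA_tensor ip_kron unfolding red_A_def[of \<omega>] unfolding Kw
    by (simp only: sum_UNIV_pair prod.case sum_distrib_left sum_distrib_right mult_ac)
  have r: "(\<Sum>k<K. \<Sum>c\<in>UNIV. \<Sum>d2\<in>UNIV. ip (red_A \<tau>) (Pk w X k c d2) (Pk w X k c d2)) =
     (\<Sum>k<K. \<Sum>t\<in>UNIV. (\<lambda>(c,d2,c2,c3).
     w k (c3,d2) * cnj (w k (c2,d2)) * ip (red_A \<tau>) (blk X c2 c) (blk X c3 c)) t)"
    unfolding Pk_def ip_sum
    by (simp only: sum_UNIV_pair prod.case complex_cnj_cnj sum_distrib_left sum_distrib_right mult_ac)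
  show ?thesis unfolding l r
    apply (subst sum.swap)
    apply (rule sum.cong[OF refl])
    apply (rule sum.reindex_bij_witness[where j = "\<lambda>(c,c2,c3,d). (c3,d,c2,c)"
        and i = "\<lambda>(c,d2,c2,c3). (c3,c2,c,d2)"])
    by auto
qed

lemma E4:
  fixes \<tau> :: "('a::finite \<times> 'b::finite) cmat" and \<omega> :: "('c::finite \<times> 'd::finite) cmat"
  assumes Kw: "\<omega> = (\<lambda>i j. \<Sum>k<K. w k i * cnj (w k j))"
  shows "ip (red_B (state_tensor \<tau> \<omega>)) Y Y = (\<Sum>k<K. \<Sum>c\<in>UNIV. \<Sum>d2\<in>UNIV. ip (red_B \<tau>) (Qk w Y k c d2) (Qk w Y k c d2))"
proof -
  have l: "ip (red_B (state_tensor \<tau> \<omega>)) Y Y = (\<Sum>t\<in>UNIV. \<Sum>k<K. (\<lambda>(d0,d1,d2,c).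
     w k (c,d0) * cnj (w k (c,d1)) * ip (red_B \<tau>) (blk Y d1 d2) (blk Y d0 d2)) t)"
    unfolding redB_tensor ip_kron unfolding red_B_def[of \<omega>] unfolding Kw
    by (simp only: sum_UNIV_pair prod.case sum_distrib_left sum_distrib_right mult_ac)
  have r: "(\<Sum>k<K. \<Sum>c\<in>UNIV. \<Sum>d2\<in>UNIV. ip (red_B \<tau>) (Qk w Y k c d2) (Qk w Y k c d2)) =
     (\<Sum>k<K. \<Sum>t\<in>UNIV. (\<lambda>(c,d2,d,d').
     w k (c,d') * cnj (w k (c,d)) * ip (red_B \<tau>) (blk Y d d2) (blk Y d' d2)) t)"
    unfolding Qk_def ip_sum
    by (simp only: sum_UNIV_pair prod.case complex_cnj_cnj sum_distrib_left sum_distrib_right mult_ac)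
  show ?thesis unfolding l r
    apply (subst sum.swap)
    apply (rule sum.cong[OF refl])
    apply (rule sum.reindex_bij_witness[where j = "\<lambda>(d0,d1,d2,c). (c,d2,d1,d0)"
        and i = "\<lambda>(c,d2,d,d'). (d',d,d2,c)"])
    by auto
qed


lemma nest3: "(\<Sum>t\<in>{..<K} \<times> (UNIV::'c::finite set) \<times> (UNIV::'d::finite set). (\<lambda>(k,c,d). g k c d) t) =
   (\<Sum>k<K. \<Sum>c\<in>UNIV. \<Sum>d\<in>UNIV. g k c d)"
  by (simp add: sum.cartesian_product)

lemma core_bound:
  fixes \<tau> :: "('a::finite \<times> 'b::finite) cmat" and \<omega> :: "('c::finite \<times> 'd::finite) cmat"
  assumes pt: "psd \<tau>" and po: "psd \<omega>"
    and mX: "\<And>c c2. mean (red_A \<tau>) (blk X c c2) = 0"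
    and mY: "\<And>d d2. mean (red_B \<tau>) (blk Y d d2) = 0"
  shows "cmod (corr (state_tensor \<tau> \<omega>) X Y) \<le> max_corr \<tau> *
     sqrt (Re (ip (red_A (state_tensor \<tau> \<omega>)) X X)) * sqrt (Re (ip (red_B (state_tensor \<tau> \<omega>)) Y Y))"
proof -
  obtain K and w :: "nat \<Rightarrow> ('c \<times> 'd) \<Rightarrow> complex" where Kw: "\<omega> = (\<lambda>i j. \<Sum>k<K. w k i * cnj (w k j))"
    using chol[OF po] by blast
  define S where "S = {..<K} \<times> (UNIV::'c set) \<times> (UNIV::'d set)"
  have finS: "finite S" unfolding S_def by simp
  define nP where "nP = (\<lambda>(k,c,d2). sqrt (Re (ip (red_A \<tau>) (Pk w X k c d2) (Pk w X k c d2))))"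
  define nQ where "nQ = (\<lambda>(k,c,d2). sqrt (Re (ip (red_B \<tau>) (Qk w Y k c d2) (Qk w Y k c d2))))"
  have mP: "mean (red_A \<tau>) (Pk w X k c d2) = 0" for k c d2
  proof -
    have "mean (red_A \<tau>) (Pk w X k c d2) = (\<Sum>c2\<in>UNIV. cnj (w k (c2,d2)) * mean (red_A \<tau>) (blk X c2 c))"
      unfolding Pk_def by (rule mean_sum)
    then show ?thesis using mX by simp
  qed
  have mQ: "mean (red_B \<tau>) (Qk w Y k c d2) = 0" for k c d2
  proof -
    have "mean (red_B \<tau>) (Qk w Y k c d2) = (\<Sum>d\<in>UNIV. cnj (w k (c,d)) * mean (red_B \<tau>) (blk Y d d2))"
      unfolding Qk_def by (rule mean_sum)
    then show ?thesis using mY by simp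
  qed
  have mu: "max_corr \<tau> \<ge> 0" by (rule max_corr_nonneg[OF pt])
  have "cmod (corr (state_tensor \<tau> \<omega>) X Y) = cmod (\<Sum>t\<in>S. (\<lambda>(k,c,d2). corr \<tau> (Pk w X k c d2) (Qk w Y k c d2)) t)"
    unfolding E1[OF Kw] S_def nest3 ..
  also have "\<dots> \<le> (\<Sum>t\<in>S. cmod ((\<lambda>(k,c,d2). corr \<tau> (Pk w X k c d2) (Qk w Y k c d2)) t))"
    by (rule norm_sum)
  also have "\<dots> \<le> (\<Sum>t\<in>S. max_corr \<tau> * (nP t * nQ t))"
  proof (rule sum_mono)
    fix t assume "t \<in> S"
    obtain k c d2 where t: "t = (k,c,d2)" by (cases t) auto
    show "cmod ((\<lambda>(k,c,d2). corr \<tau> (Pk w X k c d2) (Qk w Y k c d2)) t) \<le> max_corr \<tau> * (nP t * nQ t)"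
      unfolding t nP_def nQ_def using max_corr_scaled[OF pt mP mQ] by (simp add: mult.assoc)
  qed
  also have "\<dots> = max_corr \<tau> * (\<Sum>t\<in>S. \<bar>nP t\<bar> * \<bar>nQ t\<bar>)"
    unfolding nP_def nQ_def by (simp add: sum_distrib_left split_beta ipA_real(2)[OF pt] ipB_real(2)[OF pt])
  also have "\<dots> \<le> max_corr \<tau> * (L2_set nP S * L2_set nQ S)"
    by (rule mult_left_mono[OF L2_set_mult_ineq mu])
  also have "L2_set nP S = sqrt (Re (ip (red_A (state_tensor \<tau> \<omega>)) X X))"
  proof -
    have "(\<Sum>t\<in>S. (nP t)^2) = (\<Sum>t\<in>S. (\<lambda>(k,c,d2). Re (ip (red_A \<tau>) (Pk w X k c d2) (Pk w X k c d2))) t)"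
      unfolding nP_def by (rule sum.cong[OF refl]) (auto simp: split_beta ipA_real(2)[OF pt])
    also have "\<dots> = Re (ip (red_A (state_tensor \<tau> \<omega>)) X X)"
      unfolding E3[OF Kw] S_def nest3 by (simp add: Re_sum)
    finally show ?thesis unfolding L2_set_def by simp
  qed
  also have "L2_set nQ S = sqrt (Re (ip (red_B (state_tensor \<tau> \<omega>)) Y Y))"
  proof -
    have "(\<Sum>t\<in>S. (nQ t)^2) = (\<Sum>t\<in>S. (\<lambda>(k,c,d2). Re (ip (red_B \<tau>) (Qk w Y k c d2) (Qk w Y k c d2))) t)"
      unfolding nQ_def by (rule sum.cong[OF refl]) (auto simp: split_beta ipB_real(2)[OF pt])
    also have "\<dots> = Re (ip (red_B (state_tensor \<tau> \<omega>)) Y Y)"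
      unfolding E4[OF Kw] S_def nest3 by (simp add: Re_sum)
    finally show ?thesis unfolding L2_set_def by simp
  qed
  finally show ?thesis by (simp add: mult.assoc)
qed


lemma block_corr:
  assumes pt: "psd \<tau>" and tr: "mtrace \<tau> = 1"
  shows "corr \<tau> U V = corr \<tau> (\<lambda>a a2. U a a2 - mean (red_A \<tau>) U * idm a a2)
      (\<lambda>b b2. V b b2 - mean (red_B \<tau>) V * idm b b2) + mean (red_A \<tau>) U * cnj (mean (red_B \<tau>) V)"
  unfolding corr_decomp corr_idm2 corr_idm1[OF pt] mean_idm trace_redA tr by simp

lemma block_ip:
  assumes herm: "\<And>i j. cnj (M i j) = M j i" and tr: "(\<Sum>i\<in>UNIV. M i i) = 1"
  shows "ip M U V = ip M (\<lambda>a a2. U a a2 - mean M U * idm a a2)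
      (\<lambda>b b2. V b b2 - mean M V * idm b b2) + mean M U * cnj (mean M V)"
  unfolding ip_decomp ip_idm2 ip_idm1[OF herm] mean_idm tr by simp

lemma tensor_mc_elem:
  fixes \<tau> :: "('a::finite \<times> 'b::finite) cmat" and \<omega> :: "('c::finite \<times> 'd::finite) cmat"
  assumes pt: "psd \<tau>" and po: "psd \<omega>" and tt: "mtrace \<tau> = 1" and to: "mtrace \<omega> = 1"
    and ad: "adm (state_tensor \<tau> \<omega>) X Y"
  shows "cmod (corr (state_tensor \<tau> \<omega>) X Y) \<le> max (max_corr \<tau>) (max_corr \<omega>)"
proof -
  define P where "P = state_tensor \<tau> \<omega>"
  have pP: "psd P" unfolding P_def by (rule psd_tensor[OF pt po])
  define \<Phi> where "\<Phi> = (\<lambda>c c2. mean (red_A \<tau>) (blk X c c2))"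
  define \<Psi> where "\<Psi> = (\<lambda>d d2. mean (red_B \<tau>) (blk Y d d2))"
  define X1 where "X1 = (\<lambda>i j. X i j - \<Phi> (snd i) (snd j) * idm (fst i) (fst j))"
  define Y1 where "Y1 = (\<lambda>i j. Y i j - \<Psi> (snd i) (snd j) * idm (fst i) (fst j))"
  have bX1: "blk X1 c c2 = (\<lambda>a a2. blk X c c2 a a2 - mean (red_A \<tau>) (blk X c c2) * idm a a2)" for c c2
    unfolding X1_def blk_def \<Phi>_def by simp
  have bY1: "blk Y1 d d2 = (\<lambda>b b2. blk Y d d2 b b2 - mean (red_B \<tau>) (blk Y d d2) * idm b b2)" for d d2
    unfolding Y1_def blk_def \<Psi>_def by simp
  have trA: "(\<Sum>i\<in>UNIV. red_A \<tau> i i) = 1" using trace_redA[of \<tau>] tt by simp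
  have trB: "(\<Sum>i\<in>UNIV. red_B \<tau> i i) = 1" using trace_redB[of \<tau>] tt by simp
  have mX1: "mean (red_A \<tau>) (blk X1 c c2) = 0" for c c2
    unfolding bX1 mean_decomp mean_idm trA by simp
  have mY1: "mean (red_B \<tau>) (blk Y1 d d2) = 0" for d d2
    unfolding bY1 mean_decomp mean_idm trB by simp
  have hA: "cnj (red_A \<tau> i j) = red_A \<tau> j i" for i j by (rule redA_herm[OF pt])
  have hB: "cnj (red_B \<tau> i j) = red_B \<tau> j i" for i j by (rule redB_herm[OF pt])
  have S1: "corr P X Y = corr P X1 Y1 + corr \<omega> \<Phi> \<Psi>"
  proof -
    have "corr P X Y = (\<Sum>c\<in>UNIV. \<Sum>d\<in>UNIV. \<Sum>c2\<in>UNIV. \<Sum>d2\<in>UNIV.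
        \<omega> (c,d) (c2,d2) * (corr \<tau> (blk X1 c2 c) (blk Y1 d d2) + \<Phi> c2 c * cnj (\<Psi> d d2)))"
      unfolding P_def corr_tensor bX1 bY1 \<Phi>_def \<Psi>_def
      by (subst block_corr[OF pt tt], rule refl)
    also have "\<dots> = corr P X1 Y1 + corr \<omega> \<Phi> \<Psi>"
      unfolding P_def corr_tensor corr_def[of \<omega>]
      by (simp add: distrib_left sum.distrib mult.assoc)
    finally show ?thesis .
  qed
  have S2: "ip (red_A P) X X = ip (red_A P) X1 X1 + ip (red_A \<omega>) \<Phi> \<Phi>"
  proof -
    have "ip (red_A P) X X = (\<Sum>c\<in>UNIV. \<Sum>c2\<in>UNIV. \<Sum>c3\<in>UNIV. red_A \<omega> c c2 *
         (ip (red_A \<tau>) (blk X1 c2 c3) (blk X1 c c3) + \<Phi> c2 c3 * cnj (\<Phi> c c3)))"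
      unfolding P_def redA_tensor ip_kron bX1 \<Phi>_def
      by (subst block_ip[of "red_A \<tau>", OF hA trA], rule refl)
    also have "\<dots> = ip (red_A P) X1 X1 + ip (red_A \<omega>) \<Phi> \<Phi>"
      unfolding P_def redA_tensor ip_kron ip_def[of "red_A \<omega>"]
      by (simp add: distrib_left sum.distrib mult.assoc)
    finally show ?thesis .
  qed
  have S3: "ip (red_B P) Y Y = ip (red_B P) Y1 Y1 + ip (red_B \<omega>) \<Psi> \<Psi>"
  proof -
    have "ip (red_B P) Y Y = (\<Sum>c\<in>UNIV. \<Sum>c2\<in>UNIV. \<Sum>c3\<in>UNIV. red_B \<omega> c c2 *
         (ip (red_B \<tau>) (blk Y1 c2 c3) (blk Y1 c c3) + \<Psi> c2 c3 * cnj (\<Psi> c c3)))"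
      unfolding P_def redB_tensor ip_kron bY1 \<Psi>_def
      by (subst block_ip[of "red_B \<tau>", OF hB trB], rule refl)
    also have "\<dots> = ip (red_B P) Y1 Y1 + ip (red_B \<omega>) \<Psi> \<Psi>"
      unfolding P_def redB_tensor ip_kron ip_def[of "red_B \<omega>"]
      by (simp add: distrib_left sum.distrib mult.assoc)
    finally show ?thesis .
  qed
  have S4a: "mean (red_A \<omega>) \<Phi> = mean (red_A P) X"
    unfolding P_def redA_tensor mean_kron mean_def[of "red_A \<omega>"] \<Phi>_def ..
  have S4b: "mean (red_B \<omega>) \<Psi> = mean (red_B P) Y"
    unfolding P_def redB_tensor mean_kron mean_def[of "red_B \<omega>"] \<Psi>_def ..
  have adm': "mean (red_A P) X = 0" "mean (red_B P) Y = 0" "ip (red_A P) X X = 1" "ip (red_B P) Y Y = 1"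
    using ad unfolding adm_def P_def by auto
  define a where "a = sqrt (Re (ip (red_A P) X1 X1))"
  define b where "b = sqrt (Re (ip (red_A \<omega>) \<Phi> \<Phi>))"
  define c where "c = sqrt (Re (ip (red_B P) Y1 Y1))"
  define d where "d = sqrt (Re (ip (red_B \<omega>) \<Psi> \<Psi>))"
  have a2: "a^2 = Re (ip (red_A P) X1 X1)" "a \<ge> 0" unfolding a_def using ipA_real(2)[OF pP] by auto
  have b2: "b^2 = Re (ip (red_A \<omega>) \<Phi> \<Phi>)" "b \<ge> 0" unfolding b_def using ipA_real(2)[OF po] by auto
  have c2: "c^2 = Re (ip (red_B P) Y1 Y1)" "c \<ge> 0" unfolding c_def using ipB_real(2)[OF pP] by auto
  have d2: "d^2 = Re (ip (red_B \<omega>) \<Psi> \<Psi>)" "d \<ge> 0" unfolding d_def using ipB_real(2)[OF po] by auto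
  have ab: "a^2 + b^2 = 1" using arg_cong[OF S2, of Re] adm'(3) a2 b2 by simp
  have cd: "c^2 + d^2 = 1" using arg_cong[OF S3, of Re] adm'(4) c2 d2 by simp
  have B1: "cmod (corr P X1 Y1) \<le> max_corr \<tau> * a * c"
    unfolding a_def c_def P_def by (rule core_bound[OF pt po mX1 mY1])
  have B2: "cmod (corr \<omega> \<Phi> \<Psi>) \<le> max_corr \<omega> * b * d"
    unfolding b_def d_def by (rule max_corr_scaled[OF po]) (use S4a S4b adm' in auto)
  define m where "m = max (max_corr \<tau>) (max_corr \<omega>)"
  have m0: "m \<ge> 0" unfolding m_def using max_corr_nonneg[OF pt] by simp
  have "cmod (corr P X Y) \<le> cmod (corr P X1 Y1) + cmod (corr \<omega> \<Phi> \<Psi>)"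
    unfolding S1 by (rule norm_triangle_ineq)
  also have "\<dots> \<le> m * (a * c) + m * (b * d)"
  proof (rule add_mono)
    show "cmod (corr P X1 Y1) \<le> m * (a * c)"
      using B1 mult_right_mono[of "max_corr \<tau>" m "a * c"] a2 c2 unfolding m_def by (simp add: mult.assoc)
    show "cmod (corr \<omega> \<Phi> \<Psi>) \<le> m * (b * d)"
      using B2 mult_right_mono[of "max_corr \<omega>" m "b * d"] b2 d2 unfolding m_def by (simp add: mult.assoc)
  qed
  also have "\<dots> = m * (a * c + b * d)" by (simp add: algebra_simps)
  also have "\<dots> \<le> m * 1"
  proof (rule mult_left_mono[OF _ m0])
    have "2 * (a*c) \<le> a^2 + c^2" using sum_squares_bound[of a c] by (simp add: power2_eq_square)
    moreover have "2 * (b*d) \<le> b^2 + d^2" using sum_squares_bound[of b d] by (simp add: power2_eq_square)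
    ultimately show "a * c + b * d \<le> 1" using ab cd by linarith
  qed
  finally show ?thesis unfolding P_def m_def by simp
qed


lemma tensor_mc:
  fixes \<tau> :: "('a::finite \<times> 'b::finite) cmat" and \<omega> :: "('c::finite \<times> 'd::finite) cmat"
  assumes "density \<tau>" "density \<omega>"
  shows "max_corr (state_tensor \<tau> \<omega>) \<le> max (max_corr \<tau>) (max_corr \<omega>)"
proof -
  have "Sup (cset (state_tensor \<tau> \<omega>)) \<le> max (max_corr \<tau>) (max_corr \<omega>)"
  proof (rule cSup_least)
    show "cset (state_tensor \<tau> \<omega>) \<noteq> {}" unfolding cset_def by simp
    fix x assume "x \<in> cset (state_tensor \<tau> \<omega>)"
    then consider "x = 0" | X Y where "x = cmod (corr (state_tensor \<tau> \<omega>) X Y)" "adm (state_tensor \<tau> \<omega>) X Y"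
      unfolding cset_def by blast
    then show "x \<le> max (max_corr \<tau>) (max_corr \<omega>)"
    proof cases
      case 1 then show ?thesis using max_corr_nonneg[of \<tau>] assms unfolding density_def by simp
    next
      case 2 then show ?thesis using tensor_mc_elem[of \<tau> \<omega> X Y] assms unfolding density_def by simp
    qed
  qed
  then show ?thesis unfolding max_corr_cset[of "state_tensor \<tau> \<omega>"] .
qed

lemma state_tensor_app: "state_tensor \<tau> \<omega> ((a,c),(b,d)) ((a2,c2),(b2,d2)) = \<tau> (a,b) (a2,b2) * \<omega> (c,d) (c2,d2)"
  unfolding state_tensor_def by simp

lemma trace_tensor: "mtrace (state_tensor \<tau> \<omega>) = mtrace \<tau> * mtrace \<omega>"
proof -
  have "mtrace (state_tensor \<tau> \<omega>) = (\<Sum>t\<in>UNIV. (\<lambda>(a,c,b,d). \<tau> (a,b) (a,b) * \<omega> (c,d) (c,d)) t)"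
    unfolding mtrace_def by (simp only: sum_UNIV_pair prod.case state_tensor_app)
  also have "\<dots> = mtrace \<tau> * mtrace \<omega>"
    unfolding mtrace_def by (simp only: sum_UNIV_pair prod.case sum_product)
  finally show ?thesis .
qed

definition ptr2 :: "(('a \<times> 'c::finite) \<times> ('b \<times> 'd::finite)) cmat \<Rightarrow> ('a \<times> 'b) cmat" where
  "ptr2 T = (\<lambda>x y. \<Sum>c\<in>(UNIV::'c set). \<Sum>d\<in>(UNIV::'d set). T ((fst x,c),(snd x,d)) ((fst y,c),(snd y,d)))"
definition ptr1 :: "(('a::finite \<times> 'c) \<times> ('b::finite \<times> 'd)) cmat \<Rightarrow> ('c \<times> 'd) cmat" where
  "ptr1 T = (\<lambda>x y. \<Sum>a\<in>(UNIV::'a set). \<Sum>b\<in>(UNIV::'b set). T ((a,fst x),(b,snd x)) ((a,fst y),(b,snd y)))"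

lemma mean_kI: "mean M (kI X) = mean (red_A M) X"
proof -
  have "mean M (kI X) = (\<Sum>a\<in>UNIV. \<Sum>c\<in>UNIV. \<Sum>a2\<in>UNIV. M (a,c) (a2,c) * X a2 a)"
    unfolding mean_def kI_def sum_UNIV_pair
    by (simp only: fst_conv snd_conv mult_if0 if0_mult if_sum0 sum.delta sum.delta' finite UNIV_I if_True
      mult_1_right mult_1_left mult.assoc)
  also have "\<dots> = mean (red_A M) X"
    unfolding mean_def red_A_def sum_distrib_right
    by (rule sum.cong[OF refl], rule sum.swap)
  finally show ?thesis .
qed

lemma mean_Ik: "mean M (Ik X) = mean (red_B M) X"
proof -
  have "mean M (Ik X) = (\<Sum>a\<in>UNIV. \<Sum>c\<in>UNIV. \<Sum>c2\<in>UNIV. M (a,c) (a,c2) * X c2 c)"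
    unfolding mean_def Ik_def sum_UNIV_pair
    by (simp only: fst_conv snd_conv mult_if0 if0_mult if_sum0 sum.delta sum.delta' finite UNIV_I if_True
      mult_1_right mult_1_left mult.assoc)
  also have "\<dots> = (\<Sum>c\<in>UNIV. \<Sum>c2\<in>UNIV. \<Sum>a\<in>UNIV. M (a,c) (a,c2) * X c2 c)"
    by (subst sum.swap, rule sum.cong[OF refl], rule sum.swap)
  also have "\<dots> = mean (red_B M) X"
    unfolding mean_def red_B_def sum_distrib_right ..
  finally show ?thesis .
qed

lemma corr_ptr2: "corr T (kI X) (kI Y) = corr (ptr2 T) X Y"
proof -
  have l: "corr T (kI X) (kI Y) = (\<Sum>t\<in>UNIV. (\<lambda>(a,c,b,d,a2,b2). T ((a,c),(b,d)) ((a2,c),(b2,d)) * X a2 a * cnj (Y b b2)) t)"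
    unfolding corr_def kI_def
    by (simp only: sum_UNIV_pair prod.case fst_conv snd_conv cnj_if mult_if0 if0_mult if_sum0 sum.delta sum.delta' finite UNIV_I if_True
      complex_cnj_one mult_1_right mult_1_left mult.assoc)
  have r: "corr (ptr2 T) X Y = (\<Sum>t\<in>UNIV. (\<lambda>(a,b,a2,b2,c,d). T ((a,c),(b,d)) ((a2,c),(b2,d)) * X a2 a * cnj (Y b b2)) t)"
    unfolding corr_def ptr2_def
    by (simp only: sum_UNIV_pair prod.case fst_conv snd_conv sum_distrib_right mult.assoc)
  show ?thesis unfolding l r
    by (rule sum.reindex_bij_witness[where j = "\<lambda>(a,c,b,d,a2,b2). (a,b,a2,b2,c,d)" and i = "\<lambda>(a,b,a2,b2,c,d). (a,c,b,d,a2,b2)"]) auto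
qed

lemma corr_ptr1: "corr T (Ik X) (Ik Y) = corr (ptr1 T) X Y"
proof -
  have l: "corr T (Ik X) (Ik Y) = (\<Sum>t\<in>UNIV. (\<lambda>(a,c,b,d,c2,d2). T ((a,c),(b,d)) ((a,c2),(b,d2)) * X c2 c * cnj (Y d d2)) t)"
    unfolding corr_def Ik_def
    by (simp only: sum_UNIV_pair prod.case fst_conv snd_conv cnj_if mult_if0 if0_mult if_sum0 sum.delta sum.delta' finite UNIV_I if_True
      complex_cnj_one mult_1_right mult_1_left mult.assoc)
  have r: "corr (ptr1 T) X Y = (\<Sum>t\<in>UNIV. (\<lambda>(c,d,c2,d2,a,b). T ((a,c),(b,d)) ((a,c2),(b,d2)) * X c2 c * cnj (Y d d2)) t)"
    unfolding corr_def ptr1_def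
    by (simp only: sum_UNIV_pair prod.case fst_conv snd_conv sum_distrib_right mult.assoc)
  show ?thesis unfolding l r
    by (rule sum.reindex_bij_witness[where j = "\<lambda>(a,c,b,d,c2,d2). (c,d,c2,d2,a,b)" and i = "\<lambda>(c,d,c2,d2,a,b). (a,c,b,d,c2,d2)"]) auto
qed


lemma redAA: "red_A (red_A T) = red_A (ptr2 T)"
  unfolding red_A_def ptr2_def
  by (intro ext) (simp only: sum_UNIV_pair fst_conv snd_conv, subst sum.swap, rule refl)

lemma redAB: "red_A (red_B T) = red_B (ptr2 T)"
proof (intro ext)
  fix x y
  have l: "red_A (red_B T) x y = (\<Sum>t\<in>UNIV. (\<lambda>(d,a,c). T ((a,c),(x,d)) ((a,c),(y,d))) t)"
    unfolding red_A_def red_B_def by (simp only: sum_UNIV_pair prod.case)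
  have r: "red_B (ptr2 T) x y = (\<Sum>t\<in>UNIV. (\<lambda>(a,c,d). T ((a,c),(x,d)) ((a,c),(y,d))) t)"
    unfolding red_B_def ptr2_def by (simp only: sum_UNIV_pair prod.case fst_conv snd_conv)
  show "red_A (red_B T) x y = red_B (ptr2 T) x y" unfolding l r
    by (rule sum.reindex_bij_witness[where j = "\<lambda>(d,a,c). (a,c,d)" and i = "\<lambda>(a,c,d). (d,a,c)"]) auto
qed

lemma redBA: "red_B (red_A T) = red_A (ptr1 T)"
proof (intro ext)
  fix x y
  have l: "red_B (red_A T) x y = (\<Sum>t\<in>UNIV. (\<lambda>(a,b,d). T ((a,x),(b,d)) ((a,y),(b,d))) t)"
    unfolding red_A_def red_B_def by (simp only: sum_UNIV_pair prod.case)
  have r: "red_A (ptr1 T) x y = (\<Sum>t\<in>UNIV. (\<lambda>(d,a,b). T ((a,x),(b,d)) ((a,y),(b,d))) t)"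
    unfolding red_A_def ptr1_def by (simp only: sum_UNIV_pair prod.case fst_conv snd_conv)
  show "red_B (red_A T) x y = red_A (ptr1 T) x y" unfolding l r
    by (rule sum.reindex_bij_witness[where j = "\<lambda>(a,b,d). (d,a,b)" and i = "\<lambda>(d,a,b). (a,b,d)"]) auto
qed

lemma redBB: "red_B (red_B T) = red_B (ptr1 T)"
proof (intro ext)
  fix x y
  have l: "red_B (red_B T) x y = (\<Sum>t\<in>UNIV. (\<lambda>(b,a,c). T ((a,c),(b,x)) ((a,c),(b,y))) t)"
    unfolding red_B_def by (simp only: sum_UNIV_pair prod.case)
  have r: "red_B (ptr1 T) x y = (\<Sum>t\<in>UNIV. (\<lambda>(c,a,b). T ((a,c),(b,x)) ((a,c),(b,y))) t)"
    unfolding red_B_def ptr1_def by (simp only: sum_UNIV_pair prod.case fst_conv snd_conv)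
  show "red_B (red_B T) x y = red_B (ptr1 T) x y" unfolding l r
    by (rule sum.reindex_bij_witness[where j = "\<lambda>(b,a,c). (c,a,b)" and i = "\<lambda>(c,a,b). (b,a,c)"]) auto
qed

lemma max_corr_ptr2: assumes "psd T" shows "max_corr (ptr2 T) \<le> max_corr T"
  unfolding max_corr_cset
proof (rule cSup_subset_mono)
  show "cset (ptr2 T) \<noteq> {}" unfolding cset_def by simp
  show "bdd_above (cset T)" by (rule cset_bdd[OF assms])
  show "cset (ptr2 T) \<subseteq> cset T"
  proof
    fix x assume "x \<in> cset (ptr2 T)"
    then consider "x = 0" | X Y where "x = cmod (corr (ptr2 T) X Y)" "adm (ptr2 T) X Y"
      unfolding cset_def by blast
    then show "x \<in> cset T"
    proof cases
      case 1 then show ?thesis unfolding cset_def by simp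
    next
      case 2
      have "adm T (kI X) (kI Y)" using 2(2)
        unfolding adm_def mean_kI ip_kI redAA redAB by simp
      then show ?thesis unfolding cset_def 2(1) corr_ptr2[symmetric] by blast
    qed
  qed
qed

lemma max_corr_ptr1: assumes "psd T" shows "max_corr (ptr1 T) \<le> max_corr T"
  unfolding max_corr_cset
proof (rule cSup_subset_mono)
  show "cset (ptr1 T) \<noteq> {}" unfolding cset_def by simp
  show "bdd_above (cset T)" by (rule cset_bdd[OF assms])
  show "cset (ptr1 T) \<subseteq> cset T"
  proof
    fix x assume "x \<in> cset (ptr1 T)"
    then consider "x = 0" | X Y where "x = cmod (corr (ptr1 T) X Y)" "adm (ptr1 T) X Y"
      unfolding cset_def by blast
    then show "x \<in> cset T"
    proof cases
      case 1 then show ?thesis unfolding cset_def by simp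
    next
      case 2
      have "adm T (Ik X) (Ik Y)" using 2(2)
        unfolding adm_def mean_Ik ip_Ik redBA redBB by simp
      then show ?thesis unfolding cset_def 2(1) corr_ptr1[symmetric] by blast
    qed
  qed
qed


lemma trace_ptr2: "mtrace (ptr2 T) = mtrace T"
proof -
  have l: "mtrace (ptr2 T) = (\<Sum>t\<in>UNIV. (\<lambda>(a,b,c,d). T ((a,c),(b,d)) ((a,c),(b,d))) t)"
    unfolding mtrace_def ptr2_def by (simp only: sum_UNIV_pair prod.case fst_conv snd_conv)
  have r: "mtrace T = (\<Sum>t\<in>UNIV. (\<lambda>(a,c,b,d). T ((a,c),(b,d)) ((a,c),(b,d))) t)"
    unfolding mtrace_def by (simp only: sum_UNIV_pair prod.case)
  show ?thesis unfolding l r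
    by (rule sum.reindex_bij_witness[where j = "\<lambda>(a,b,c,d). (a,c,b,d)" and i = "\<lambda>(a,c,b,d). (a,b,c,d)"]) auto
qed

lemma trace_ptr1: "mtrace (ptr1 T) = mtrace T"
proof -
  have l: "mtrace (ptr1 T) = (\<Sum>t\<in>UNIV. (\<lambda>(c,d,a,b). T ((a,c),(b,d)) ((a,c),(b,d))) t)"
    unfolding mtrace_def ptr1_def by (simp only: sum_UNIV_pair prod.case fst_conv snd_conv)
  have r: "mtrace T = (\<Sum>t\<in>UNIV. (\<lambda>(a,c,b,d). T ((a,c),(b,d)) ((a,c),(b,d))) t)"
    unfolding mtrace_def by (simp only: sum_UNIV_pair prod.case)
  show ?thesis unfolding l r
    by (rule sum.reindex_bij_witness[where j = "\<lambda>(c,d,a,b). (a,c,b,d)" and i = "\<lambda>(a,c,b,d). (c,d,a,b)"]) auto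
qed

lemma psd_ptr2:
  fixes T :: "(('a::finite \<times> 'c::finite) \<times> ('b::finite \<times> 'd::finite)) cmat"
  assumes pT: "psd T" shows "psd (ptr2 T)"
proof -
  define u :: "('a \<times> 'b \<Rightarrow> complex) \<Rightarrow> 'c \<Rightarrow> 'd \<Rightarrow> ('a \<times> 'c) \<times> ('b \<times> 'd) \<Rightarrow> complex"
    where "u = (\<lambda>v c d x. (if snd (fst x) = c then 1 else 0) * ((if snd (snd x) = d then 1 else 0) * v (fst (fst x), fst (snd x))))"
  have key: "qf (ptr2 T) v = (\<Sum>c\<in>UNIV. \<Sum>d\<in>UNIV. qf T (u v c d))" for v
  proof -
    have l: "qf (ptr2 T) v = (\<Sum>t\<in>UNIV. (\<lambda>(a,b,a2,b2,c,d). cnj (v (a,b)) * T ((a,c),(b,d)) ((a2,c),(b2,d)) * v (a2,b2)) t)"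
      unfolding qf_def ptr2_def by (simp only: sum_UNIV_pair prod.case fst_conv snd_conv sum_distrib_left sum_distrib_right)
    have r: "(\<Sum>c\<in>UNIV. \<Sum>d\<in>UNIV. qf T (u v c d)) = (\<Sum>t\<in>UNIV. (\<lambda>(c,d,a,b,a2,b2). cnj (v (a,b)) * T ((a,c),(b,d)) ((a2,c),(b2,d)) * v (a2,b2)) t)"
      unfolding qf_def u_def
      by (simp only: sum_UNIV_pair prod.case fst_conv snd_conv complex_cnj_mult cnj_if complex_cnj_one complex_cnj_zero
         mult_if0 if0_mult if_sum0 sum.delta sum.delta' finite UNIV_I if_True mult_1_right mult_1_left)
    show ?thesis unfolding l r
      by (rule sum.reindex_bij_witness[where j = "\<lambda>(a,b,a2,b2,c,d). (c,d,a,b,a2,b2)" and i = "\<lambda>(c,d,a,b,a2,b2). (a,b,a2,b2,c,d)"]) auto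
  qed
  show ?thesis unfolding psd_def
  proof
    fix v
    have "Im (qf (ptr2 T) v) = 0 \<and> Re (qf (ptr2 T) v) \<ge> 0"
      unfolding key using psdD[OF pT] by (simp add: sum_nonneg)
    then show "Im (\<Sum>i\<in>UNIV. \<Sum>j\<in>UNIV. cnj (v i) * ptr2 T i j * v j) = 0 \<and>
        0 \<le> Re (\<Sum>i\<in>UNIV. \<Sum>j\<in>UNIV. cnj (v i) * ptr2 T i j * v j)"
      unfolding qf_def .
  qed
qed


lemma psd_ptr1:
  fixes T :: "(('a::finite \<times> 'c::finite) \<times> ('b::finite \<times> 'd::finite)) cmat"
  assumes pT: "psd T" shows "psd (ptr1 T)"
proof -
  define u :: "('c \<times> 'd \<Rightarrow> complex) \<Rightarrow> 'a \<Rightarrow> 'b \<Rightarrow> ('a \<times> 'c) \<times> ('b \<times> 'd) \<Rightarrow> complex"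
    where "u = (\<lambda>v a b x. (if fst (fst x) = a then 1 else 0) * ((if fst (snd x) = b then 1 else 0) * v (snd (fst x), snd (snd x))))"
  have key: "qf (ptr1 T) v = (\<Sum>a\<in>UNIV. \<Sum>b\<in>UNIV. qf T (u v a b))" for v
  proof -
    have l: "qf (ptr1 T) v = (\<Sum>t\<in>UNIV. (\<lambda>(c,d,c2,d2,a,b). cnj (v (c,d)) * T ((a,c),(b,d)) ((a,c2),(b,d2)) * v (c2,d2)) t)"
      unfolding qf_def ptr1_def by (simp only: sum_UNIV_pair prod.case fst_conv snd_conv sum_distrib_left sum_distrib_right)
    have r: "(\<Sum>a\<in>UNIV. \<Sum>b\<in>UNIV. qf T (u v a b)) = (\<Sum>t\<in>UNIV. (\<lambda>(a,b,c,d,c2,d2). cnj (v (c,d)) * T ((a,c),(b,d)) ((a,c2),(b,d2)) * v (c2,d2)) t)"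
      unfolding qf_def u_def
      by (simp only: sum_UNIV_pair prod.case fst_conv snd_conv complex_cnj_mult cnj_if complex_cnj_one complex_cnj_zero
         mult_if0 if0_mult if_sum0 sum.delta sum.delta' finite UNIV_I if_True mult_1_right mult_1_left)
    show ?thesis unfolding l r
      by (rule sum.reindex_bij_witness[where j = "\<lambda>(c,d,c2,d2,a,b). (a,b,c,d,c2,d2)" and i = "\<lambda>(a,b,c,d,c2,d2). (c,d,c2,d2,a,b)"]) auto
  qed
  show ?thesis unfolding psd_def
  proof
    fix v
    have "Im (qf (ptr1 T) v) = 0 \<and> Re (qf (ptr1 T) v) \<ge> 0"
      unfolding key using psdD[OF pT] by (simp add: sum_nonneg)
    then show "Im (\<Sum>i\<in>UNIV. \<Sum>j\<in>UNIV. cnj (v i) * ptr1 T i j * v j) = 0 \<and>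
        0 \<le> Re (\<Sum>i\<in>UNIV. \<Sum>j\<in>UNIV. cnj (v i) * ptr1 T i j * v j)"
      unfolding qf_def .
  qed
qed

lemma ptr2_tensor: "ptr2 (state_tensor \<rho> \<sigma>) = (\<lambda>x y. \<rho> x y * mtrace \<sigma>)"
  unfolding ptr2_def mtrace_def state_tensor_def
  by (intro ext) (simp add: sum_UNIV_pair sum_distrib_left split_beta)

lemma ptr1_tensor: "ptr1 (state_tensor \<rho> \<sigma>) = (\<lambda>x y. mtrace \<rho> * \<sigma> x y)"
  unfolding ptr1_def mtrace_def state_tensor_def
  by (intro ext) (simp add: sum_UNIV_pair sum_distrib_right split_beta)

lemma ptr2_lin: "ptr2 (\<lambda>x y. \<Sum>i<n. p i * T i x y) = (\<lambda>x y. \<Sum>i<n. p i * ptr2 (T i) x y)"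
  unfolding ptr2_def by (intro ext) (simp add: sum_distrib_left sum.swap[of _ "{..<n}"])

lemma ptr1_lin: "ptr1 (\<lambda>x y. \<Sum>i<n. p i * T i x y) = (\<lambda>x y. \<Sum>i<n. p i * ptr1 (T i) x y)"
  unfolding ptr1_def by (intro ext) (simp add: sum_distrib_left sum.swap[of _ "{..<n}"])


lemma divmod_aux1: "j < n1 \<Longrightarrow> k < n2 \<Longrightarrow> j * n2 + k < n1 * (n2::nat)"
proof -
  assume jk: "j < n1" "k < n2"
  have "j * n2 + k < (j + 1) * n2" using jk by simp
  also have "\<dots> \<le> n1 * n2" using jk by (intro mult_right_mono) auto
  finally show ?thesis .
qed

lemma divmod_aux2: "i < n1 * (n2::nat) \<Longrightarrow> i div n2 < n1 \<and> i mod n2 < n2"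
proof -
  assume i: "i < n1 * n2"
  have n2: "n2 > 0" using i by (cases "n2 = 0") auto
  show ?thesis using i n2 by (simp add: less_mult_imp_div_less)
qed

lemma sum_divmod:
  fixes n1 n2 :: nat
  shows "(\<Sum>i<n1*n2. f (i div n2) (i mod n2)) = (\<Sum>j<n1. \<Sum>k<n2. f j k)"
proof -
  have "(\<Sum>j<n1. \<Sum>k<n2. f j k) = (\<Sum>t\<in>{..<n1} \<times> {..<n2}. (\<lambda>(j,k). f j k) t)"
    by (simp add: sum.cartesian_product)
  also have "(\<Sum>i<n1*n2. f (i div n2) (i mod n2)) = (\<Sum>t\<in>{..<n1} \<times> {..<n2}. (\<lambda>(j,k). f j k) t)"
    by (rule sum.reindex_bij_witness[where j = "\<lambda>i. (i div n2, i mod n2)" and i = "\<lambda>(j,k). j*n2 + k"])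
       (auto dest: divmod_aux2 intro: divmod_aux1)
  finally show ?thesis by simp
qed


definition decS :: "('a::finite \<times> 'b::finite) cmat \<Rightarrow> real set" where
  "decS \<rho> = {m. \<exists>(n::nat) (p :: nat \<Rightarrow> real) (\<tau> :: nat \<Rightarrow> ('a \<times> 'b) cmat).
       0 < n \<and> (\<forall>i<n. 0 \<le> p i \<and> density (\<tau> i)) \<and>
       \<rho> = (\<lambda>x y. \<Sum>i<n. complex_of_real (p i) * \<tau> i x y) \<and>
       m = Max ((\<lambda>i. max_corr (\<tau> i)) ` {..<n})}"

lemma max_ent_decS: "max_ent \<rho> = Inf (decS \<rho>)"
  unfolding max_ent_def decS_def ..

lemma decS_memI:
  fixes \<tau> :: "nat \<Rightarrow> ('a::finite \<times> 'b::finite) cmat"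
  assumes "0 < n" "\<forall>i<n. 0 \<le> p i \<and> density (\<tau> i)" "\<rho> = (\<lambda>x y. \<Sum>i<n. complex_of_real (p i) * \<tau> i x y)"
  shows "Max ((\<lambda>i. max_corr (\<tau> i)) ` {..<n}) \<in> decS \<rho>"
  unfolding decS_def using assms by blast

lemma decS_nonneg:
  fixes \<rho> :: "('a::finite \<times> 'b::finite) cmat"
  assumes "m \<in> decS \<rho>" shows "0 \<le> m"
proof -
  obtain n and p :: "nat \<Rightarrow> real" and \<tau> :: "nat \<Rightarrow> ('a \<times> 'b) cmat" where H: "0 < n" "\<forall>i<n. 0 \<le> p i \<and> density (\<tau> i)"
    "m = Max ((\<lambda>i. max_corr (\<tau> i)) ` {..<n})"
    using assms unfolding decS_def by blast
  have d0: "density (\<tau> 0)" using H(1,2) by simp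
  have "0 \<le> max_corr (\<tau> 0)" using d0 max_corr_nonneg[of "\<tau> 0"] unfolding density_def by simp
  also have "\<dots> \<le> m" unfolding H(3) using H(1) by (intro Max_ge) auto
  finally show ?thesis .
qed

lemma decS_bdd: "bdd_below (decS \<rho>)"
  by (rule bdd_belowI[of _ 0]) (rule decS_nonneg)

lemma decS_ne: assumes "density \<rho>" shows "decS \<rho> \<noteq> {}"
proof -
  have e: "\<rho> = (\<lambda>x y. \<Sum>i<(1::nat). complex_of_real ((\<lambda>_. 1) i) * (\<lambda>_. \<rho>) i x y)" by simp
  have dd: "\<forall>i<(1::nat). 0 \<le> (\<lambda>_. 1::real) i \<and> density ((\<lambda>_. \<rho>) i)" using assms by simp
  have "Max ((\<lambda>i. max_corr ((\<lambda>_. \<rho>) i)) ` {..<(1::nat)}) \<in> decS \<rho>"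
    by (rule decS_memI[OF _ dd e]) simp
  then show ?thesis by auto
qed

lemma ge1:
  fixes \<rho> :: "('a::finite \<times> 'b::finite) cmat" and \<sigma> :: "('c::finite \<times> 'd::finite) cmat"
  assumes dr: "density \<rho>" and ds: "density \<sigma>"
  shows "max_ent \<rho> \<le> max_ent (state_tensor \<rho> \<sigma>)"
  unfolding max_ent_decS
proof (rule cInf_greatest)
  have "density (state_tensor \<rho> \<sigma>)" using dr ds psd_tensor[of \<rho> \<sigma>] trace_tensor[of \<rho> \<sigma>] unfolding density_def by simp
  then show "decS (state_tensor \<rho> \<sigma>) \<noteq> {}" by (rule decS_ne)
  fix m assume "m \<in> decS (state_tensor \<rho> \<sigma>)"
  then obtain n and p :: "nat \<Rightarrow> real" and T :: "nat \<Rightarrow> (('a \<times> 'c) \<times> ('b \<times> 'd)) cmat" where H: "0 < n" "\<forall>i<n. 0 \<le> p i \<and> density (T i)"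
    "state_tensor \<rho> \<sigma> = (\<lambda>x y. \<Sum>i<n. complex_of_real (p i) * T i x y)"
    "m = Max ((\<lambda>i. max_corr (T i)) ` {..<n})"
    unfolding decS_def by blast
  define \<tau>' where "\<tau>' = (\<lambda>i. ptr2 (T i))"
  have dens: "\<forall>i<n. 0 \<le> p i \<and> density (\<tau>' i)"
  proof (intro allI impI)
    fix i assume "i < n"
    then have "0 \<le> p i" "psd (T i)" "mtrace (T i) = 1" using H(2) unfolding density_def by auto
    then show "0 \<le> p i \<and> density (\<tau>' i)"
      unfolding \<tau>'_def density_def using psd_ptr2[of "T i"] trace_ptr2[of "T i"] by simp
  qed
  have "\<rho> = ptr2 (state_tensor \<rho> \<sigma>)" unfolding ptr2_tensor using ds unfolding density_def by simp
  also have "\<dots> = (\<lambda>x y. \<Sum>i<n. complex_of_real (p i) * \<tau>' i x y)"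
    unfolding H(3) ptr2_lin \<tau>'_def ..
  finally have rho: "\<rho> = (\<lambda>x y. \<Sum>i<n. complex_of_real (p i) * \<tau>' i x y)" .
  have "Inf (decS \<rho>) \<le> Max ((\<lambda>i. max_corr (\<tau>' i)) ` {..<n})"
    by (rule cInf_lower[OF decS_memI[OF H(1) dens rho] decS_bdd])
  also have "\<dots> \<le> m"
  proof -
    have fin: "finite ((\<lambda>i. max_corr (\<tau>' i)) ` {..<n})" by simp
    have ne: "(\<lambda>i. max_corr (\<tau>' i)) ` {..<n} \<noteq> {}" using H(1) by auto
    have all: "\<forall>x\<in>(\<lambda>i. max_corr (\<tau>' i)) ` {..<n}. x \<le> m"
    proof
      fix x assume "x \<in> (\<lambda>i. max_corr (\<tau>' i)) ` {..<n}"
      then obtain i where i: "i < n" "x = max_corr (\<tau>' i)" by auto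
      have "x \<le> max_corr (T i)" unfolding i(2) \<tau>'_def
        by (rule max_corr_ptr2) (use H(2) i(1) in \<open>auto simp: density_def\<close>)
      also have "\<dots> \<le> Max ((\<lambda>i. max_corr (T i)) ` {..<n})" using i by (intro Max_ge) auto
      finally show "x \<le> m" unfolding H(4) .
    qed
    show ?thesis using Max_le_iff[OF fin ne] all by blast
  qed
  finally show "Inf (decS \<rho>) \<le> m" .
qed

lemma ge2:
  fixes \<rho> :: "('a::finite \<times> 'b::finite) cmat" and \<sigma> :: "('c::finite \<times> 'd::finite) cmat"
  assumes dr: "density \<rho>" and ds: "density \<sigma>"
  shows "max_ent \<sigma> \<le> max_ent (state_tensor \<rho> \<sigma>)"
  unfolding max_ent_decS
proof (rule cInf_greatest)
  have "density (state_tensor \<rho> \<sigma>)" using dr ds psd_tensor[of \<rho> \<sigma>] trace_tensor[of \<rho> \<sigma>] unfolding density_def by simp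
  then show "decS (state_tensor \<rho> \<sigma>) \<noteq> {}" by (rule decS_ne)
  fix m assume "m \<in> decS (state_tensor \<rho> \<sigma>)"
  then obtain n and p :: "nat \<Rightarrow> real" and T :: "nat \<Rightarrow> (('a \<times> 'c) \<times> ('b \<times> 'd)) cmat" where H: "0 < n" "\<forall>i<n. 0 \<le> p i \<and> density (T i)"
    "state_tensor \<rho> \<sigma> = (\<lambda>x y. \<Sum>i<n. complex_of_real (p i) * T i x y)"
    "m = Max ((\<lambda>i. max_corr (T i)) ` {..<n})"
    unfolding decS_def by blast
  define \<tau>' where "\<tau>' = (\<lambda>i. ptr1 (T i))"
  have dens: "\<forall>i<n. 0 \<le> p i \<and> density (\<tau>' i)"
  proof (intro allI impI)
    fix i assume "i < n"
    then have "0 \<le> p i" "psd (T i)" "mtrace (T i) = 1" using H(2) unfolding density_def by auto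
    then show "0 \<le> p i \<and> density (\<tau>' i)"
      unfolding \<tau>'_def density_def using psd_ptr1[of "T i"] trace_ptr1[of "T i"] by simp
  qed
  have "\<sigma> = ptr1 (state_tensor \<rho> \<sigma>)" unfolding ptr1_tensor using dr unfolding density_def by simp
  also have "\<dots> = (\<lambda>x y. \<Sum>i<n. complex_of_real (p i) * \<tau>' i x y)"
    unfolding H(3) ptr1_lin \<tau>'_def ..
  finally have rho: "\<sigma> = (\<lambda>x y. \<Sum>i<n. complex_of_real (p i) * \<tau>' i x y)" .
  have "Inf (decS \<sigma>) \<le> Max ((\<lambda>i. max_corr (\<tau>' i)) ` {..<n})"
    by (rule cInf_lower[OF decS_memI[OF H(1) dens rho] decS_bdd])
  also have "\<dots> \<le> m"
  proof -
    have fin: "finite ((\<lambda>i. max_corr (\<tau>' i)) ` {..<n})" by simp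
    have ne: "(\<lambda>i. max_corr (\<tau>' i)) ` {..<n} \<noteq> {}" using H(1) by auto
    have all: "\<forall>x\<in>(\<lambda>i. max_corr (\<tau>' i)) ` {..<n}. x \<le> m"
    proof
      fix x assume "x \<in> (\<lambda>i. max_corr (\<tau>' i)) ` {..<n}"
      then obtain i where i: "i < n" "x = max_corr (\<tau>' i)" by auto
      have "x \<le> max_corr (T i)" unfolding i(2) \<tau>'_def
        by (rule max_corr_ptr1) (use H(2) i(1) in \<open>auto simp: density_def\<close>)
      also have "\<dots> \<le> Max ((\<lambda>i. max_corr (T i)) ` {..<n})" using i by (intro Max_ge) auto
      finally show "x \<le> m" unfolding H(4) .
    qed
    show ?thesis using Max_le_iff[OF fin ne] all by blast
  qed
  finally show "Inf (decS \<sigma>) \<le> m" .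
qed



lemma le_dir:
  fixes \<rho> :: "('a::finite \<times> 'b::finite) cmat" and \<sigma> :: "('c::finite \<times> 'd::finite) cmat"
  assumes dr: "density \<rho>" and ds: "density \<sigma>"
  shows "max_ent (state_tensor \<rho> \<sigma>) \<le> max (max_ent \<rho>) (max_ent \<sigma>)"
proof (rule field_le_epsilon)
  fix e :: real assume e: "0 < e"
  obtain m1 where m1: "m1 \<in> decS \<rho>" "m1 < max_ent \<rho> + e"
    using cInf_lessD[OF decS_ne[OF dr], of "max_ent \<rho> + e"] e unfolding max_ent_decS by auto
  obtain m2 where m2: "m2 \<in> decS \<sigma>" "m2 < max_ent \<sigma> + e"
    using cInf_lessD[OF decS_ne[OF ds], of "max_ent \<sigma> + e"] e unfolding max_ent_decS by auto
  obtain n1 and p1 :: "nat \<Rightarrow> real" and \<tau>1 :: "nat \<Rightarrow> ('a \<times> 'b) cmat" where H1: "0 < n1" "\<forall>i<n1. 0 \<le> p1 i \<and> density (\<tau>1 i)"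
    "\<rho> = (\<lambda>x y. \<Sum>i<n1. complex_of_real (p1 i) * \<tau>1 i x y)"
    "m1 = Max ((\<lambda>i. max_corr (\<tau>1 i)) ` {..<n1})"
    using m1(1) unfolding decS_def by blast
  obtain n2 and p2 :: "nat \<Rightarrow> real" and \<tau>2 :: "nat \<Rightarrow> ('c \<times> 'd) cmat" where H2: "0 < n2" "\<forall>i<n2. 0 \<le> p2 i \<and> density (\<tau>2 i)"
    "\<sigma> = (\<lambda>x y. \<Sum>i<n2. complex_of_real (p2 i) * \<tau>2 i x y)"
    "m2 = Max ((\<lambda>i. max_corr (\<tau>2 i)) ` {..<n2})"
    using m2(1) unfolding decS_def by blast
  define p where "p = (\<lambda>i. p1 (i div n2) * p2 (i mod n2))"
  define T where "T = (\<lambda>i. state_tensor (\<tau>1 (i div n2)) (\<tau>2 (i mod n2)))"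
  have n0: "0 < n1 * n2" using H1(1) H2(1) by simp
  have dens: "\<forall>i<n1*n2. 0 \<le> p i \<and> density (T i)"
  proof (intro allI impI)
    fix i assume "i < n1 * n2"
    then have i: "i div n2 < n1" "i mod n2 < n2" using divmod_aux2 by auto
    have d1: "0 \<le> p1 (i div n2)" "psd (\<tau>1 (i div n2))" "mtrace (\<tau>1 (i div n2)) = 1"
      using H1(2) i(1) unfolding density_def by auto
    have d2: "0 \<le> p2 (i mod n2)" "psd (\<tau>2 (i mod n2))" "mtrace (\<tau>2 (i mod n2)) = 1"
      using H2(2) i(2) unfolding density_def by auto
    show "0 \<le> p i \<and> density (T i)"
      unfolding p_def T_def density_def
      using d1 d2 psd_tensor[OF d1(2) d2(2)] trace_tensor[of "\<tau>1 (i div n2)" "\<tau>2 (i mod n2)"] by simp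
  qed
  have eq: "state_tensor \<rho> \<sigma> = (\<lambda>x y. \<Sum>i<n1*n2. complex_of_real (p i) * T i x y)"
  proof (intro ext)
    fix x y :: "('a \<times> 'c) \<times> ('b \<times> 'd)"
    obtain a c b d where x: "x = ((a,c),(b,d))" by (metis prod.collapse)
    obtain a2 c2 b2 d2 where y: "y = ((a2,c2),(b2,d2))" by (metis prod.collapse)
    have "state_tensor \<rho> \<sigma> x y = \<rho> (a,b) (a2,b2) * \<sigma> (c,d) (c2,d2)" unfolding x y state_tensor_app ..
    also have "\<dots> = (\<Sum>j<n1. \<Sum>k<n2. complex_of_real (p1 j * p2 k) * state_tensor (\<tau>1 j) (\<tau>2 k) x y)"
      unfolding x y state_tensor_app
      by (subst H1(3), subst H2(3), simp add: sum_product mult_ac)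
    also have "\<dots> = (\<Sum>i<n1*n2. complex_of_real (p i) * T i x y)"
      unfolding p_def T_def by (rule sum_divmod[symmetric])
    finally show "state_tensor \<rho> \<sigma> x y = (\<Sum>i<n1*n2. complex_of_real (p i) * T i x y)" .
  qed
  have "max_ent (state_tensor \<rho> \<sigma>) \<le> Max ((\<lambda>i. max_corr (T i)) ` {..<n1*n2})"
    unfolding max_ent_decS by (rule cInf_lower[OF decS_memI[OF n0 dens eq] decS_bdd])
  also have "\<dots> \<le> max m1 m2"
  proof -
    have fin: "finite ((\<lambda>i. max_corr (T i)) ` {..<n1*n2})" by simp
    have "0 \<in> {..<n1*n2}" using n0 by simp
    then have ne: "(\<lambda>i. max_corr (T i)) ` {..<n1*n2} \<noteq> {}" by blast
    have all: "\<forall>x\<in>(\<lambda>i. max_corr (T i)) ` {..<n1*n2}. x \<le> max m1 m2"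
    proof
      fix x assume "x \<in> (\<lambda>i. max_corr (T i)) ` {..<n1*n2}"
      then obtain i where i0: "i < n1*n2" "x = max_corr (T i)" by auto
      then have i: "i div n2 < n1" "i mod n2 < n2" using divmod_aux2 by auto
      have "x \<le> max (max_corr (\<tau>1 (i div n2))) (max_corr (\<tau>2 (i mod n2)))"
        unfolding i0(2) T_def by (rule tensor_mc) (use H1(2) H2(2) i in auto)
      also have "max_corr (\<tau>1 (i div n2)) \<le> m1" unfolding H1(4) using i by (intro Max_ge) auto
      also have "max_corr (\<tau>2 (i mod n2)) \<le> m2" unfolding H2(4) using i by (intro Max_ge) auto
      finally show "x \<le> max m1 m2" by simp
    qed
    show ?thesis using Max_le_iff[OF fin ne] all by blast
  qed
  also have "\<dots> \<le> max (max_ent \<rho>) (max_ent \<sigma>) + e" using m1(2) m2(2) by (simp add: max_def)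
  finally show "max_ent (state_tensor \<rho> \<sigma>) \<le> max (max_ent \<rho>) (max_ent \<sigma>) + e" .
qed

theorem theorem5:
  fixes \<rho> :: "('a::finite \<times> 'b::finite) cmat" and \<sigma> :: "('c::finite \<times> 'd::finite) cmat"
  assumes "density \<rho>" and "density \<sigma>"
  shows "max_ent (state_tensor \<rho> \<sigma>) = max (max_ent \<rho>) (max_ent \<sigma>)"
  using le_dir[OF assms] ge1[OF assms] ge2[OF assms] by simp


end
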